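(* Let $x\sim\nu$, uniform on $\mathcal S^{d-1}(\sqrt d)$, let $q:\mathbb R\to\mathbb R$ be $L$-Lipschitz with $|q(0)|\le L$, and let $x^TAx,x^TBx$ be two orthogonal degree 2 spherical harmonics. Then $\big|\mathbb E[q(x^TAx)x^TBx]\big|\le CL\big(\sqrt{\|A\|_{op}\log d}+\|B\|_{op}\log d\big)$ for an absolute constant $C$.
   Context: $x^TAx$ is a degree 2 spherical harmonic if $A$ is symmetric, $\mathbb E[x^TAx]=0$, $\mathbb E[(x^TAx)^2]=1$; orthogonal means $\mathbb E[(x^TAx)(x^TBx)]=0$. *)

theory Defs
  imports "HOL-Analysis.Analysis"
begin

text \<open>Vectors in R^d are functions nat => real restricted to the index set {..<d};
  R^d carries the product Lebesgue measure.\<close>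

definition lebR :: "nat \<Rightarrow> (nat \<Rightarrow> real) measure" where
  "lebR d = PiM {..<d} (\<lambda>_. lborel)"

definition sqnorm :: "nat \<Rightarrow> (nat \<Rightarrow> real) \<Rightarrow> real" where
  "sqnorm d x = (\<Sum>i<d. (x i)^2)"

text \<open>Uniform probability measure on the sphere of radius sqrt d in R^d:
  the radial projection of the uniform distribution on the unit ball
  (cone measure = normalized surface measure for the sphere).\<close>

definition sphere_unif :: "nat \<Rightarrow> (nat \<Rightarrow> real) measure" where
  "sphere_unif d =
     distr (uniform_measure (lebR d) {y \<in> space (lebR d). sqnorm d y < 1}) (lebR d)
       (\<lambda>y. restrict (\<lambda>i. sqrt (real d) / sqrt (sqnorm d y) * y i) {..<d})"

definition qform :: "nat \<Rightarrow> (nat \<Rightarrow> nat \<Rightarrow> real) \<Rightarrow> (nat \<Rightarrow> real) \<Rightarrow> real" where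
  "qform d A x = (\<Sum>i<d. \<Sum>j<d. x i * A i j * x j)"

definition opnorm :: "nat \<Rightarrow> (nat \<Rightarrow> nat \<Rightarrow> real) \<Rightarrow> real" where
  "opnorm d A = Sup {sqrt (\<Sum>i<d. (\<Sum>j<d. A i j * x j)^2) | x. sqnorm d x \<le> 1}"

definition symmetric_mat :: "nat \<Rightarrow> (nat \<Rightarrow> nat \<Rightarrow> real) \<Rightarrow> bool" where
  "symmetric_mat d A \<longleftrightarrow> (\<forall>i<d. \<forall>j<d. A i j = A j i)"

definition sph_harm2 :: "nat \<Rightarrow> (nat \<Rightarrow> nat \<Rightarrow> real) \<Rightarrow> bool" where
  "sph_harm2 d A \<longleftrightarrow> symmetric_mat d A
     \<and> (\<integral>x. qform d A x \<partial>sphere_unif d) = 0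
     \<and> (\<integral>x. (qform d A x)^2 \<partial>sphere_unif d) = 1"

definition orth_harm2 :: "nat \<Rightarrow> (nat \<Rightarrow> nat \<Rightarrow> real) \<Rightarrow> (nat \<Rightarrow> nat \<Rightarrow> real) \<Rightarrow> bool" where
  "orth_harm2 d A B \<longleftrightarrow> (\<integral>x. qform d A x * qform d B x \<partial>sphere_unif d) = 0"

end

theory Submission
  imports Defs "HOL-Probability.Probability_Measure"
begin


interpretation pl: product_sigma_finite "(\<lambda>_. lborel) :: nat \<Rightarrow> real measure"
  by (simp add: product_sigma_finite_def sigma_finite_lborel)

lemma space_lebR: "space (lebR d) = PiE {..<d} (\<lambda>_. UNIV)"
  by (simp add: lebR_def space_PiM)

lemma sets_lebR_cong: "sets (lebR d) = sets (PiM {..<d} (\<lambda>_. lborel))"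
  by (simp add: lebR_def)

definition shear :: "nat \<Rightarrow> nat \<Rightarrow> nat \<Rightarrow> real \<Rightarrow> (nat \<Rightarrow> real) \<Rightarrow> (nat \<Rightarrow> real)" where
  "shear d i j c x = restrict (\<lambda>k. if k = i then x i + c * x j else x k) {..<d}"

lemma shear_meas: assumes "i < d" "j < d" shows "shear d i j c \<in> measurable (lebR d) (lebR d)"
  unfolding shear_def lebR_def
proof (rule measurable_restrict)
  fix k assume k: "k \<in> {..<d}"
  show "(\<lambda>x. if k = i then x i + c * x j else x k) \<in> measurable (PiM {..<d} (\<lambda>_. lborel)) lborel"
    using assms k by (cases "k = i") (auto intro!: borel_measurable_add borel_measurable_times)
qed

lemma shear_nn:
  assumes ij: "i < d" "j < d" "i \<noteq> j" and f: "f \<in> borel_measurable (lebR d)"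
  shows "(\<integral>\<^sup>+x. f (shear d i j c x) \<partial>lebR d) = (\<integral>\<^sup>+x. f x \<partial>lebR d)"
proof -
  define I where "I = {..<d} - {i}"
  have II: "insert i I = {..<d}" "finite I" "i \<notin> I" using ij by (auto simp: I_def)
  have fm: "f \<in> borel_measurable (PiM (insert i I) (\<lambda>_. lborel))"
    using f by (simp add: II lebR_def)
  have fsm: "(\<lambda>x. f (shear d i j c x)) \<in> borel_measurable (PiM (insert i I) (\<lambda>_. lborel))"
    using measurable_comp[OF shear_meas[OF ij(1,2)] f] by (simp add: II lebR_def comp_def)
  have "(\<integral>\<^sup>+x. f (shear d i j c x) \<partial>lebR d)
      = (\<integral>\<^sup>+ x. (\<integral>\<^sup>+ y. f (shear d i j c (x(i := y))) \<partial>lborel) \<partial>(PiM I (\<lambda>_. lborel)))"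
    unfolding lebR_def II(1)[symmetric] by (rule pl.product_nn_integral_insert[OF II(2,3) fsm])
  also have "\<dots> = (\<integral>\<^sup>+ x. (\<integral>\<^sup>+ y. f (x(i := y)) \<partial>lborel) \<partial>(PiM I (\<lambda>_. lborel)))"
  proof (rule nn_integral_cong)
    fix x assume x: "x \<in> space (PiM I (\<lambda>_. lborel :: real measure))"
    have xj: "x j = x j" ..
    have eq: "shear d i j c (x(i := y)) = x(i := y + c * x j)" for y
      using x ij unfolding shear_def by (auto simp: space_PiM PiE_def extensional_def I_def fun_eq_iff)
    have um: "(\<lambda>y. x(i := y)) \<in> measurable lborel (PiM (insert i I) (\<lambda>_. lborel))"
      by (rule measurable_fun_upd[where J=I]) (use x in auto)
    have gm: "(\<lambda>y. f (x(i := y))) \<in> borel_measurable (lborel :: real measure)"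
      using measurable_comp[OF um fm] by (simp add: comp_def)
    have "(\<integral>\<^sup>+ y. f (x(i := y + c * x j)) \<partial>lborel) = (\<integral>\<^sup>+ y. f (x(i := c * x j + y)) \<partial>lborel)"
      by (simp add: add.commute)
    also have "\<dots> = (\<integral>\<^sup>+ y. f (x(i := y)) \<partial>distr lborel borel ((+) (c * x j)))"
      by (subst nn_integral_distr) (use gm in auto)
    also have "\<dots> = (\<integral>\<^sup>+ y. f (x(i := y)) \<partial>lborel)"
      by (simp add: lborel_distr_plus)
    finally show "(\<integral>\<^sup>+ y. f (shear d i j c (x(i := y))) \<partial>lborel) = (\<integral>\<^sup>+ y. f (x(i := y)) \<partial>lborel)"
      by (simp add: eq)
  qed
  also have "\<dots> = (\<integral>\<^sup>+x. f x \<partial>lebR d)"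
    unfolding lebR_def II(1)[symmetric] by (rule pl.product_nn_integral_insert[OF II(2,3) fm, symmetric])
  finally show ?thesis .
qed

lemma shear_distr:
  assumes ij: "i < d" "j < d" "i \<noteq> j"
  shows "distr (lebR d) (lebR d) (shear d i j c) = lebR d"
proof (rule measure_eqI)
  fix A assume A: "A \<in> sets (distr (lebR d) (lebR d) (shear d i j c))"
  then have A': "A \<in> sets (lebR d)" by simp
  have "emeasure (distr (lebR d) (lebR d) (shear d i j c)) A = (\<integral>\<^sup>+x. indicator A x \<partial>distr (lebR d) (lebR d) (shear d i j c))"
    using A by simp
  also have "\<dots> = (\<integral>\<^sup>+x. indicator A (shear d i j c x) \<partial>lebR d)"
    by (rule nn_integral_distr[OF shear_meas[OF ij(1,2)]]) (use A' in simp)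
  also have "\<dots> = (\<integral>\<^sup>+x. indicator A x \<partial>lebR d)"
    by (rule shear_nn[OF ij]) (use A' in simp)
  finally show "emeasure (distr (lebR d) (lebR d) (shear d i j c)) A = emeasure (lebR d) A"
    using A' by simp
qed simp


definition rot :: "nat \<Rightarrow> nat \<Rightarrow> nat \<Rightarrow> real \<Rightarrow> (nat \<Rightarrow> real) \<Rightarrow> (nat \<Rightarrow> real)" where
  "rot d i j t x = restrict (\<lambda>k. if k = i then cos t * x i - sin t * x j
      else if k = j then sin t * x i + cos t * x j else x k) {..<d}"

lemma rot_meas: assumes "i < d" "j < d" shows "rot d i j t \<in> measurable (lebR d) (lebR d)"
  unfolding rot_def lebR_def
proof (rule measurable_restrict)
  fix k assume k: "k \<in> {..<d}"
  show "(\<lambda>x. if k = i then cos t * x i - sin t * x j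
      else if k = j then sin t * x i + cos t * x j else x k) \<in> measurable (PiM {..<d} (\<lambda>_. lborel)) lborel"
    using assms k by (cases "k = i"; cases "k = j") (auto intro!: borel_measurable_add borel_measurable_diff borel_measurable_times)
qed

lemma rot_shears:
  assumes ij: "i < d" "j < d" "i \<noteq> j" and s: "sin t \<noteq> 0"
  shows "rot d i j t = shear d i j (- ((1 - cos t) / sin t)) \<circ> shear d j i (sin t) \<circ> shear d i j (- ((1 - cos t) / sin t))"
proof
  fix x
  have sc: "sin t ^ 2 + cos t ^ 2 = 1" by simp
  define T where "T = (1 - cos t) / sin t"
  have h1: "T * sin t = 1 - cos t" using s by (simp add: T_def)
  have h2: "T * (1 + cos t) = sin t"
  proof -
    have "T * (1 + cos t) = (1 - cos t) * (1 + cos t) / sin t" by (simp add: T_def)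
    also have "(1 - cos t) * (1 + cos t) = sin t * sin t"
      using sc by (simp add: power2_eq_square algebra_simps)
    finally show ?thesis using s by simp
  qed
  have "x i + - T * x j + - T * (x j + sin t * (x i + - T * x j))
      = x i - (T * sin t) * x i - (T * (1 + (1 - T * sin t))) * x j" by (simp add: algebra_simps)
  also have "\<dots> = cos t * x i - sin t * x j"
  proof -
    have e: "1 + (1 - (1 - cos t)) = 1 + cos t" by simp
    show ?thesis unfolding h1 e h2 by (simp add: algebra_simps)
  qed
  finally have e1: "cos t * x i - sin t * x j = x i + - T * x j + - T * (x j + sin t * (x i + - T * x j))"
    by simp
  have e2: "sin t * x i + cos t * x j = x j + sin t * (x i + - T * x j)"
  proof -
    have "x j + sin t * (x i + - T * x j) = sin t * x i + (1 - T * sin t) * x j" by (simp add: algebra_simps)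
    then show ?thesis unfolding h1 by simp
  qed
  show "rot d i j t x = (shear d i j (- ((1 - cos t) / sin t)) \<circ> shear d j i (sin t) \<circ> shear d i j (- ((1 - cos t) / sin t))) x"
    unfolding T_def[symmetric] using ij unfolding rot_def shear_def comp_def
    by (auto simp: fun_eq_iff e1 e2)
qed

lemma rot_distr:
  assumes ij: "i < d" "j < d" "i \<noteq> j" and s: "sin t \<noteq> 0"
  shows "distr (lebR d) (lebR d) (rot d i j t) = lebR d"
proof -
  define c where "c = - ((1 - cos t) / sin t)"
  have "distr (lebR d) (lebR d) (rot d i j t) = distr (distr (distr (lebR d) (lebR d) (shear d i j c)) (lebR d) (shear d j i (sin t))) (lebR d) (shear d i j c)"
  proof -
    have m1: "shear d i j c \<in> measurable (lebR d) (lebR d)" "shear d j i (sin t) \<in> measurable (lebR d) (lebR d)"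
      using ij by (auto intro: shear_meas)
    have "distr (distr (distr (lebR d) (lebR d) (shear d i j c)) (lebR d) (shear d j i (sin t))) (lebR d) (shear d i j c)
        = distr (distr (lebR d) (lebR d) (shear d j i (sin t) \<circ> shear d i j c)) (lebR d) (shear d i j c)"
      by (simp add: distr_distr[OF m1(2) m1(1)])
    also have "\<dots> = distr (lebR d) (lebR d) (shear d i j c \<circ> (shear d j i (sin t) \<circ> shear d i j c))"
      by (rule distr_distr[OF m1(1) measurable_comp[OF m1(1) m1(2)]])
    finally show ?thesis unfolding rot_shears[OF ij s] c_def[symmetric] by (simp add: comp_assoc)
  qed
  also have "\<dots> = lebR d" using ij by (simp add: shear_distr)
  finally show ?thesis .
qed

lemma sum_two_out:
  assumes "finite S" "i \<in> S" "j \<in> S" "i \<noteq> j"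
  shows "sum g S = g i + g j + sum g (S - {i, j})"
proof -
  have "sum g S = g i + sum g (S - {i})" using assms by (simp add: sum.remove)
  also have "sum g (S - {i}) = g j + sum g (S - {i} - {j})" using assms by (intro sum.remove) auto
  finally show ?thesis by (simp add: Diff_insert2[symmetric] insert_commute add.assoc)
qed

lemma sqnorm_rot:
  assumes ij: "i < d" "j < d" "i \<noteq> j"
  shows "sqnorm d (rot d i j t x) = sqnorm d x"
proof -
  have sc: "sin t ^ 2 + cos t ^ 2 = 1" by simp
  have key: "(cos t * x i - sin t * x j)^2 + (sin t * x i + cos t * x j)^2 = x i ^2 + x j ^2"
  proof -
    have "(cos t * x i - sin t * x j)^2 + (sin t * x i + cos t * x j)^2 = (sin t ^ 2 + cos t ^ 2) * (x i ^2 + x j ^2)"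
      by algebra
    then show ?thesis by simp
  qed
  have "sqnorm d (rot d i j t x) = (\<Sum>k<d. (rot d i j t x k)^2)" by (simp add: sqnorm_def)
  also have "\<dots> = (rot d i j t x i)^2 + (rot d i j t x j)^2 + (\<Sum>k\<in>{..<d} - {i,j}. (rot d i j t x k)^2)"
    using ij by (intro sum_two_out) auto
  also have "(\<Sum>k\<in>{..<d} - {i,j}. (rot d i j t x k)^2) = (\<Sum>k\<in>{..<d} - {i,j}. (x k)^2)"
    by (rule sum.cong) (auto simp: rot_def)
  also have "(rot d i j t x i)^2 + (rot d i j t x j)^2 = x i ^2 + x j ^2"
    using ij key by (simp add: rot_def)
  also have "x i ^2 + x j ^2 + (\<Sum>k\<in>{..<d} - {i,j}. (x k)^2) = sqnorm d x"
    unfolding sqnorm_def using ij by (intro sum_two_out[symmetric]) auto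
  finally show ?thesis .
qed

definition proj :: "nat \<Rightarrow> (nat \<Rightarrow> real) \<Rightarrow> (nat \<Rightarrow> real)" where
  "proj d y = restrict (\<lambda>i. sqrt (real d) / sqrt (sqnorm d y) * y i) {..<d}"

lemma sphere_unif_proj: "sphere_unif d = distr (uniform_measure (lebR d) {y \<in> space (lebR d). sqnorm d y < 1}) (lebR d) (proj d)"
  unfolding sphere_unif_def proj_def by (rule refl)

lemma sqnorm_meas[measurable]: "sqnorm d \<in> borel_measurable (lebR d)"
  unfolding sqnorm_def lebR_def
  by (intro borel_measurable_sum borel_measurable_power measurable_component_singleton) auto

lemma proj_meas: "proj d \<in> measurable (lebR d) (lebR d)"
proof -
  have "(\<lambda>y. restrict (\<lambda>i. sqrt (real d) / sqrt (sqnorm d y) * y i) {..<d}) \<in> measurable (lebR d) (PiM {..<d} (\<lambda>_. lborel))"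
  proof (rule measurable_restrict)
    fix k assume k: "k \<in> {..<d}"
    have "(\<lambda>x. x k) \<in> borel_measurable (lebR d)"
      using k measurable_component_singleton[of k "{..<d}" "\<lambda>_. lborel"] unfolding lebR_def by simp
    then show "(\<lambda>x. sqrt (real d) / sqrt (sqnorm d x) * x k) \<in> measurable (lebR d) lborel"
      by simp
  qed
  then show ?thesis unfolding proj_def by (simp add: lebR_def)
qed

lemma rot_proj:
  assumes ij: "i < d" "j < d" "i \<noteq> j"
  shows "rot d i j t (proj d y) = proj d (rot d i j t y)"
  using ij unfolding proj_def sqnorm_rot[OF ij] 
  by (auto simp: rot_def fun_eq_iff algebra_simps add_divide_distrib diff_divide_distrib)

lemma ball_sets: "{y \<in> space (lebR d). sqnorm d y < 1} \<in> sets (lebR d)"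
  by measurable

lemma rot_space: "rot d i j t y \<in> space (lebR d)"
  by (simp add: rot_def space_lebR)

lemma unif_rot:
  assumes ij: "i < d" "j < d" "i \<noteq> j" and s: "sin t \<noteq> 0"
  defines "B \<equiv> {y \<in> space (lebR d). sqnorm d y < 1}"
  shows "distr (uniform_measure (lebR d) B) (lebR d) (rot d i j t) = uniform_measure (lebR d) B"
proof (rule measure_eqI)
  have Bs: "B \<in> sets (lebR d)" unfolding B_def by (rule ball_sets)
  have rm: "rot d i j t \<in> measurable (uniform_measure (lebR d) B) (lebR d)"
    using rot_meas[OF ij(1,2)] by (simp add: measurable_cong_sets[OF sets_uniform_measure refl])
  fix A assume A: "A \<in> sets (distr (uniform_measure (lebR d) B) (lebR d) (rot d i j t))"
  then have A': "A \<in> sets (lebR d)" by simp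
  have pre: "rot d i j t -` A \<inter> space (lebR d) \<in> sets (lebR d)"
    using rot_meas[OF ij(1,2)] A' by (rule measurable_sets)
  have eqs: "B \<inter> (rot d i j t -` A \<inter> space (lebR d)) = rot d i j t -` (B \<inter> A) \<inter> space (lebR d)"
    unfolding B_def using sqnorm_rot[OF ij] rot_space by auto
  have "emeasure (distr (uniform_measure (lebR d) B) (lebR d) (rot d i j t)) A
      = emeasure (uniform_measure (lebR d) B) (rot d i j t -` A \<inter> space (lebR d))"
    using A' rm by (simp add: emeasure_distr)
  also have "\<dots> = emeasure (lebR d) (B \<inter> (rot d i j t -` A \<inter> space (lebR d))) / emeasure (lebR d) B"
    using Bs pre by simp
  also have "emeasure (lebR d) (B \<inter> (rot d i j t -` A \<inter> space (lebR d))) = emeasure (distr (lebR d) (lebR d) (rot d i j t)) (B \<inter> A)"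
    unfolding eqs using Bs A' by (simp add: emeasure_distr rot_meas ij)
  also have "\<dots> = emeasure (lebR d) (B \<inter> A)" by (simp add: rot_distr[OF ij s])
  finally show "emeasure (distr (uniform_measure (lebR d) B) (lebR d) (rot d i j t)) A = emeasure (uniform_measure (lebR d) B) A"
    using Bs A' by simp
qed simp

lemma sphere_rot:
  assumes ij: "i < d" "j < d" "i \<noteq> j" and s: "sin t \<noteq> 0"
  shows "distr (sphere_unif d) (lebR d) (rot d i j t) = sphere_unif d"
proof -
  define B where "B = {y \<in> space (lebR d). sqnorm d y < 1}"
  define U where "U = uniform_measure (lebR d) B"
  have rm: "rot d i j t \<in> measurable U (lebR d)"
    using rot_meas[OF ij(1,2)] by (simp add: U_def measurable_cong_sets[OF sets_uniform_measure refl])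
  have pm: "proj d \<in> measurable U (lebR d)"
    using proj_meas by (simp add: U_def measurable_cong_sets[OF sets_uniform_measure refl])
  have "distr (sphere_unif d) (lebR d) (rot d i j t) = distr (distr U (lebR d) (proj d)) (lebR d) (rot d i j t)"
    by (simp add: sphere_unif_proj U_def B_def)
  also have "\<dots> = distr U (lebR d) (rot d i j t \<circ> proj d)"
    by (rule distr_distr[OF rot_meas[OF ij(1,2)] pm])
  also have "rot d i j t \<circ> proj d = proj d \<circ> rot d i j t"
    using rot_proj[OF ij] by (auto simp: fun_eq_iff)
  also have "distr U (lebR d) (proj d \<circ> rot d i j t) = distr (distr U (lebR d) (rot d i j t)) (lebR d) (proj d)"
    by (rule distr_distr[OF proj_meas rm, symmetric])
  also have "distr U (lebR d) (rot d i j t) = U"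
    unfolding U_def B_def by (rule unif_rot[OF ij s])
  finally show ?thesis by (simp add: sphere_unif_proj U_def B_def)
qed


lemma ball_emeasure:
  fixes d :: nat
  defines "B \<equiv> {y \<in> space (lebR d). sqnorm d y < 1}"
  shows "emeasure (lebR d) B \<noteq> 0" "emeasure (lebR d) B \<noteq> \<infinity>"
proof -
  have Bs: "B \<in> sets (lebR d)" unfolding B_def by (rule ball_sets)
  have sub1: "B \<subseteq> PiE {..<d} (\<lambda>_. {-1..1::real})"
  proof
    fix y assume y: "y \<in> B"
    have "(y k)^2 < 1" if k: "k < d" for k
    proof -
      have "(y k)^2 \<le> sqnorm d y" unfolding sqnorm_def
        by (rule member_le_sum) (use k in auto)
      then show ?thesis using y by (auto simp: B_def)
    qed
    then have "\<bar>y k\<bar> < 1" if "k < d" for k using that abs_square_less_1 by blast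
    then show "y \<in> PiE {..<d} (\<lambda>_. {-1..1::real})"
      using y by (auto simp: B_def space_lebR PiE_def abs_less_iff less_imp_le)
  qed
  have "emeasure (lebR d) B \<le> emeasure (lebR d) (PiE {..<d} (\<lambda>_. {-1..1::real}))"
    by (rule emeasure_mono[OF sub1]) (simp add: lebR_def)
  also have "\<dots> = (\<Prod>k\<in>{..<d}. emeasure lborel {-1..1::real})"
    unfolding lebR_def by (rule pl.emeasure_PiM) auto
  also have "\<dots> < \<infinity>" by (simp add: less_top[symmetric] power_eq_top_ennreal)
  finally show "emeasure (lebR d) B \<noteq> \<infinity>" by simp
  define r where "r = 1 / (real d + 1)"
  have r: "r > 0" by (simp add: r_def)
  have sub2: "PiE {..<d} (\<lambda>_. {-r..r}) \<subseteq> B"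
  proof
    fix y assume y: "y \<in> PiE {..<d} (\<lambda>_. {-r..r})"
    have "(y k)^2 \<le> r^2" if "k < d" for k
    proof -
      have "\<bar>y k\<bar> \<le> r" using y that by (auto simp: PiE_def Pi_def abs_le_iff)
      then show ?thesis using power_mono[of "\<bar>y k\<bar>" r 2] by simp
    qed
    then have "sqnorm d y \<le> (\<Sum>k<d. r^2)" unfolding sqnorm_def by (intro sum_mono) auto
    also have "\<dots> = real d / (real d + 1)^2" by (simp add: r_def power_divide)
    also have "\<dots> < 1"
    proof -
      have "real d < (real d + 1)^2" by (simp add: power2_eq_square algebra_simps) (smt (verit) of_nat_0_le_iff mult_nonneg_nonneg)
      then show ?thesis by (simp add: divide_less_eq)
    qed
    finally show "y \<in> B" using y by (auto simp: B_def space_lebR PiE_def)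
  qed
  have "0 < (\<Prod>k\<in>{..<d}. emeasure lborel {-r..r})"
    using r by (simp add: prod_pos, subst ennreal_power) auto
  also have "(\<Prod>k\<in>{..<d}. emeasure lborel {-r..r}) = emeasure (lebR d) (PiE {..<d} (\<lambda>_. {-r..r}))"
    unfolding lebR_def by (rule pl.emeasure_PiM[symmetric]) auto
  also have "\<dots> \<le> emeasure (lebR d) B"
    by (rule emeasure_mono[OF sub2 Bs])
  finally show "emeasure (lebR d) B \<noteq> 0" by simp
qed

lemma prob_sphere: "prob_space (sphere_unif d)"
  unfolding sphere_unif_proj
  by (intro prob_space.prob_space_distr prob_space_uniform_measure ball_emeasure)
     (simp add: measurable_cong_sets[OF sets_uniform_measure refl] proj_meas)

lemma sets_sphere: "sets (sphere_unif d) = sets (lebR d)"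
  by (simp add: sphere_unif_def)

lemma space_sphere: "space (sphere_unif d) = space (lebR d)"
  by (simp add: sphere_unif_def)

lemma meas_sphere_cong: "measurable (sphere_unif d) N = measurable (lebR d) N"
  by (rule measurable_cong_sets[OF sets_sphere refl])

lemma AE_lebR_nonzero:
  assumes "0 < d" shows "AE y in lebR d. y 0 \<noteq> 0"
proof (rule AE_I')
  let ?N = "PiE {..<d} (\<lambda>k. if k = 0 then {0} else (UNIV::real set))"
  have "emeasure (lebR d) ?N = (\<Prod>k\<in>{..<d}. emeasure lborel (if k = 0 then {0} else (UNIV::real set)))"
    unfolding lebR_def by (rule pl.emeasure_PiM) auto
  also have "\<dots> = 0"
    using assms by (intro prod_zero) (auto intro!: bexI[of _ 0])
  finally show "?N \<in> null_sets (lebR d)"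
    by (simp add: null_sets_def lebR_def)
  show "{y \<in> space (lebR d). \<not> y 0 \<noteq> 0} \<subseteq> ?N"
    using assms by (auto simp: space_lebR PiE_def Pi_def)
qed

definition onS :: "nat \<Rightarrow> (nat \<Rightarrow> real) \<Rightarrow> bool" where
  "onS d x \<longleftrightarrow> x \<in> space (lebR d) \<and> sqnorm d x = real d"

lemma AE_onS:
  assumes "0 < d" shows "AE x in sphere_unif d. onS d x"
proof -
  define B where "B = {y \<in> space (lebR d). sqnorm d y < 1}"
  have Bs: "B \<in> sets (lebR d)" unfolding B_def by (rule ball_sets)
  have pm: "proj d \<in> measurable (uniform_measure (lebR d) B) (lebR d)"
    using proj_meas by (simp add: measurable_cong_sets[OF sets_uniform_measure refl])
  have "AE y in lebR d. y \<in> B \<longrightarrow> onS d (proj d y)"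
    using AE_lebR_nonzero[OF assms]
  proof eventually_elim
    case (elim y)
    have "0 < (y 0)^2" using elim by simp
    also have "(y 0)^2 \<le> sqnorm d y" unfolding sqnorm_def by (rule member_le_sum) (use assms in auto)
    finally have s: "sqnorm d y > 0" .
    have sq: "(sqrt (real d) * y k / sqrt (sqnorm d y))^2 = real d * (y k)^2 / sqnorm d y" for k
      using s by (simp add: power_mult_distrib power_divide)
    have "sqnorm d (proj d y) = (\<Sum>k<d. real d * (y k)^2 / sqnorm d y)"
      by (subst (1) sqnorm_def) (simp add: proj_def sq)
    also have "\<dots> = (\<Sum>k<d. real d / sqnorm d y * (y k)^2)" by simp
    also have "\<dots> = real d / sqnorm d y * sqnorm d y" by (simp add: sqnorm_def sum_distrib_left)
    also have "\<dots> = real d" using s by simp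
    finally show ?case by (simp add: onS_def proj_def space_lebR)
  qed
  then have "AE y in uniform_measure (lebR d) B. onS d (proj d y)"
    by (rule AE_uniform_measureI[OF Bs])
  moreover have "{x \<in> space (lebR d). onS d x} \<in> sets (lebR d)"
    unfolding onS_def by measurable
  ultimately show ?thesis
    unfolding sphere_unif_proj B_def[symmetric] by (simp add: AE_distr_iff[OF pm])
qed


lemma onS_rot: "onS d x \<Longrightarrow> i < d \<Longrightarrow> j < d \<Longrightarrow> i \<noteq> j \<Longrightarrow> onS d (rot d i j t x)"
  by (simp add: onS_def sqnorm_rot rot_space)

lemma rot_0: "x \<in> space (lebR d) \<Longrightarrow> rot d i j 0 x = x"
  by (auto simp: rot_def space_lebR PiE_def extensional_def fun_eq_iff)

lemma rot_add:
  assumes "i < d" "j < d" "i \<noteq> j"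
  shows "rot d i j s (rot d i j t x) = rot d i j (s + t) x"
  using assms by (auto simp: rot_def fun_eq_iff cos_add sin_add algebra_simps)

lemma sphere_rot_int:
  fixes F :: "(nat \<Rightarrow> real) \<Rightarrow> real"
  assumes ij: "i < d" "j < d" "i \<noteq> j" and s: "sin t \<noteq> 0" and F: "F \<in> borel_measurable (lebR d)"
  shows "(\<integral>x. F (rot d i j t x) \<partial>sphere_unif d) = (\<integral>x. F x \<partial>sphere_unif d)"
proof -
  have rm: "rot d i j t \<in> measurable (sphere_unif d) (lebR d)"
    using rot_meas[OF ij(1,2)] by (simp add: meas_sphere_cong)
  have "(\<integral>x. F x \<partial>sphere_unif d) = (\<integral>x. F x \<partial>distr (sphere_unif d) (lebR d) (rot d i j t))"
    by (simp add: sphere_rot[OF ij s])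
  also have "\<dots> = (\<integral>x. F (rot d i j t x) \<partial>sphere_unif d)"
    by (rule integral_distr[OF rm F])
  finally show ?thesis by simp
qed


lemma ibp:
  assumes ij: "i < d" "j < d" "i \<noteq> j"
  and Fm: "F \<in> borel_measurable (lebR d)" and Gm: "G \<in> borel_measurable (lebR d)"
  and FB: "\<And>x. onS d x \<Longrightarrow> \<bar>F x\<bar> \<le> MF" and GB: "\<And>x. onS d x \<Longrightarrow> \<bar>G x\<bar> \<le> MG"
  and D: "\<And>x. onS d x \<Longrightarrow> ((\<lambda>t. F (rot d i j t x)) has_real_derivative G x) (at 0)"
  shows "(\<integral>x. G x \<partial>sphere_unif d) = 0"
proof -
  interpret S: prob_space "sphere_unif d" by (rule prob_sphere)
  have d0: "0 < d" using ij by auto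
  have AE: "AE x in sphere_unif d. onS d x" by (rule AE_onS[OF d0])
  have D': "((\<lambda>t. F (rot d i j t x)) has_real_derivative G (rot d i j t0 x)) (at t0)" if x: "onS d x" for x t0
  proof -
    have x': "x \<in> space (lebR d)" using x by (simp add: onS_def)
    have "((\<lambda>t. F (rot d i j t (rot d i j t0 x))) has_real_derivative G (rot d i j t0 x)) (at (t0 + - t0))"
      using D[OF onS_rot[OF x ij]] by simp
    then have "((\<lambda>t. F (rot d i j (t + - t0) (rot d i j t0 x))) has_real_derivative G (rot d i j t0 x)) (at t0)"
      by (subst (asm) DERIV_shift) 
    then show ?thesis by (simp add: rot_add[OF ij])
  qed
  have MVB: "\<bar>F (rot d i j h x) - F x\<bar> \<le> MG * \<bar>h\<bar>" if x: "onS d x" for x h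
  proof -
    have x': "x \<in> space (lebR d)" using x by (simp add: onS_def)
    consider "h = 0" | "h > 0" | "h < 0" by linarith
    then show ?thesis
    proof cases
      case 1 then show ?thesis using x' by (simp add: rot_0)
    next
      case 2
      have "\<exists>z. 0 < z \<and> z < h \<and> F (rot d i j h x) - F (rot d i j 0 x) = (h - 0) * G (rot d i j z x)"
        by (rule MVT2[OF 2]) (rule D'[OF x])
      then obtain z where eq: "F (rot d i j h x) - F (rot d i j 0 x) = (h - 0) * G (rot d i j z x)" by blast
      have g: "\<bar>G (rot d i j z x)\<bar> \<le> MG" by (rule GB[OF onS_rot[OF x ij]])
      have "\<bar>F (rot d i j h x) - F x\<bar> = h * \<bar>G (rot d i j z x)\<bar>"
        using eq 2 x' by (simp add: rot_0 abs_mult)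
      also have "\<dots> \<le> h * MG" using g 2 by (intro mult_left_mono) auto
      finally show ?thesis using 2 by (simp add: mult.commute)
    next
      case 3
      have "\<exists>z. h < z \<and> z < 0 \<and> F (rot d i j 0 x) - F (rot d i j h x) = (0 - h) * G (rot d i j z x)"
        by (rule MVT2[OF 3]) (rule D'[OF x])
      then obtain z where eq: "F (rot d i j 0 x) - F (rot d i j h x) = (0 - h) * G (rot d i j z x)" by blast
      have g: "\<bar>G (rot d i j z x)\<bar> \<le> MG" by (rule GB[OF onS_rot[OF x ij]])
      have "\<bar>F (rot d i j h x) - F x\<bar> = (- h) * \<bar>G (rot d i j z x)\<bar>"
        using eq 3 x' by (simp add: rot_0 abs_mult abs_minus_commute)
      also have "\<dots> \<le> (- h) * MG" using g 3 by (intro mult_left_mono) auto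
      finally show ?thesis using 3 by (simp add: mult.commute)
    qed
  qed
  define hs :: "nat \<Rightarrow> real" where "hs n = inverse (real (Suc n))" for n
  have hs0: "hs n > 0" for n by (simp add: hs_def)
  have hss: "sin (hs n) \<noteq> 0" for n
  proof -
    have "hs n \<le> 1" by (simp add: hs_def inverse_le_1_iff)
    then have "hs n < pi" using pi_gt3 by linarith
    then show ?thesis using sin_gt_zero[OF hs0[of n]] by simp
  qed
  define s where "s n x = (F (rot d i j (hs n) x) - F x) / hs n" for n x
  have Fms: "F \<in> borel_measurable (sphere_unif d)" using Fm by (simp add: meas_sphere_cong)
  have Gms: "G \<in> borel_measurable (sphere_unif d)" using Gm by (simp add: meas_sphere_cong)
  have Frm: "(\<lambda>x. F (rot d i j t x)) \<in> borel_measurable (sphere_unif d)" for t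
    using measurable_comp[OF rot_meas[OF ij(1,2)] Fm] by (simp add: meas_sphere_cong comp_def)
  have Fint: "integrable (sphere_unif d) F"
    by (rule S.integrable_const_bound[where B=MF]) (use AE FB Fms in auto)
  have Frint: "integrable (sphere_unif d) (\<lambda>x. F (rot d i j t x))" for t
  proof -
    have "AE x in sphere_unif d. norm (F (rot d i j t x)) \<le> MF"
      using AE by eventually_elim (simp add: FB onS_rot ij)
    then show ?thesis by (rule S.integrable_const_bound[OF _ Frm])
  qed
  have sint: "(\<integral>x. s n x \<partial>sphere_unif d) = 0" for n
  proof -
    have "(\<integral>x. s n x \<partial>sphere_unif d) = (\<integral>x. F (rot d i j (hs n) x) - F x \<partial>sphere_unif d) / hs n"
      unfolding s_def by (rule integral_divide_zero)
    also have "(\<integral>x. F (rot d i j (hs n) x) - F x \<partial>sphere_unif d) = 0"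
      using Frint Fint sphere_rot_int[OF ij hss Fm] by simp
    finally show ?thesis by simp
  qed
  have lim: "(\<lambda>n. \<integral>x. s n x \<partial>sphere_unif d) \<longlonglongrightarrow> (\<integral>x. G x \<partial>sphere_unif d)"
  proof (rule integral_dominated_convergence[where w="\<lambda>_. MG"])
    show "G \<in> borel_measurable (sphere_unif d)" by (rule Gms)
    show "s n \<in> borel_measurable (sphere_unif d)" for n
      unfolding s_def using Frm[of "hs n"] Fms by (intro borel_measurable_divide borel_measurable_diff) auto
    show "integrable (sphere_unif d) (\<lambda>_. MG)" by simp
    show "AE x in sphere_unif d. (\<lambda>n. s n x) \<longlonglongrightarrow> G x"
      using AE
    proof eventually_elim
      case (elim x)
      have x': "x \<in> space (lebR d)" using elim by (simp add: onS_def)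
      have "((\<lambda>h. (F (rot d i j (0 + h) x) - F (rot d i j 0 x)) / h) \<longlongrightarrow> G x) (at 0)"
        using D[OF elim] unfolding DERIV_def .
      then have "((\<lambda>h. (F (rot d i j h x) - F x) / h) \<longlongrightarrow> G x) (at 0)"
        using x' by (simp add: rot_0)
      note L = LIMSEQ_SEQ_conv[THEN iffD2, OF this, rule_format]
      have hsn: "\<forall>n. hs n \<noteq> 0" using hs0 by (metis less_irrefl)
      have hsl: "hs \<longlonglongrightarrow> 0" unfolding hs_def[abs_def] by (rule LIMSEQ_inverse_real_of_nat)
      show ?case unfolding s_def by (rule L) (use hsn hsl in auto)
    qed
    show "AE x in sphere_unif d. norm (s n x) \<le> MG" for n
      using AE
    proof eventually_elim
      case (elim x)
      have "\<bar>F (rot d i j (hs n) x) - F x\<bar> \<le> MG * hs n" using MVB[OF elim, of "hs n"] hs0[of n] by simp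
      then show ?case using hs0[of n] by (simp add: s_def abs_divide divide_le_eq)
    qed
  qed
  then have "(\<lambda>n. 0::real) \<longlonglongrightarrow> (\<integral>x. G x \<partial>sphere_unif d)" by (simp add: sint)
  then show ?thesis by (simp add: LIMSEQ_const_iff)
qed


definition mv :: "nat \<Rightarrow> (nat \<Rightarrow> nat \<Rightarrow> real) \<Rightarrow> (nat \<Rightarrow> real) \<Rightarrow> nat \<Rightarrow> real" where
  "mv d M x k = (\<Sum>l<d. M k l * x l)"

definition kq :: "nat \<Rightarrow> (nat \<Rightarrow> nat \<Rightarrow> real) \<Rightarrow> nat \<Rightarrow> nat \<Rightarrow> (nat \<Rightarrow> real) \<Rightarrow> real" where
  "kq d M i j x = 2 * (x i * mv d M x j - x j * mv d M x i)"

definition k2 :: "nat \<Rightarrow> (nat \<Rightarrow> nat \<Rightarrow> real) \<Rightarrow> nat \<Rightarrow> nat \<Rightarrow> (nat \<Rightarrow> real) \<Rightarrow> real" where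
  "k2 d M i j x = 2 * (M j j * (x i)^2 + M i i * (x j)^2 - 2 * M i j * x i * x j
      - x i * mv d M x i - x j * mv d M x j)"

definition ip :: "nat \<Rightarrow> (nat \<Rightarrow> nat \<Rightarrow> real) \<Rightarrow> (nat \<Rightarrow> nat \<Rightarrow> real) \<Rightarrow> (nat \<Rightarrow> real) \<Rightarrow> real" where
  "ip d A B x = (\<Sum>k<d. mv d A x k * mv d B x k)"

definition tr :: "nat \<Rightarrow> (nat \<Rightarrow> nat \<Rightarrow> real) \<Rightarrow> real" where
  "tr d M = (\<Sum>k<d. M k k)"

definition jv :: "nat \<Rightarrow> nat \<Rightarrow> (nat \<Rightarrow> real) \<Rightarrow> nat \<Rightarrow> real" where
  "jv i j x k = (if k = i then - x j else if k = j then x i else 0)"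

lemma qform_mv: "qform d M x = (\<Sum>k<d. x k * mv d M x k)"
  by (simp add: qform_def mv_def sum_distrib_left mult.assoc)

lemma mv_jv:
  assumes "i < d" "j < d" "i \<noteq> j"
  shows "mv d M (jv i j x) k = - M k i * x j + M k j * x i"
proof -
  have "mv d M (jv i j x) k = (\<Sum>l<d. (if l = i then - M k i * x j else 0) + (if l = j then M k j * x i else 0))"
    unfolding mv_def jv_def by (intro sum.cong) (use assms in auto)
  also have "\<dots> = - M k i * x j + M k j * x i"
    using assms by (simp add: sum.distrib)
  finally show ?thesis .
qed

lemma rot0k: "k < d \<Longrightarrow> rot d i j 0 x k = x k"
  by (simp add: rot_def)

lemma dcomp:
  assumes "k < d"
  shows "((\<lambda>t. rot d i j t x k) has_real_derivative jv i j x k) (at 0)"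
proof -
  consider "k = i" | "k \<noteq> i" "k = j" | "k \<noteq> i" "k \<noteq> j" by blast
  then show ?thesis
  proof cases
    case 1
    have "((\<lambda>t. cos t * x i - sin t * x j) has_real_derivative - x j) (at 0)"
      by (rule derivative_eq_intros refl | simp)+
    then show ?thesis using 1 assms by (simp add: rot_def jv_def)
  next
    case 2
    have "((\<lambda>t. sin t * x i + cos t * x j) has_real_derivative x i) (at 0)"
      by (rule derivative_eq_intros refl | simp)+
    then show ?thesis using 2 assms by (simp add: rot_def jv_def)
  next
    case 3
    then show ?thesis using assms by (simp add: rot_def jv_def)
  qed
qed

lemma dmv:
  "((\<lambda>t. mv d M (rot d i j t x) k) has_real_derivative mv d M (jv i j x) k) (at 0)"
  unfolding mv_def
  by (intro DERIV_sum DERIV_cmult dcomp) auto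

lemma dqform:
  assumes ij: "i < d" "j < d" "i \<noteq> j" and sym: "symmetric_mat d M"
  shows "((\<lambda>t. qform d M (rot d i j t x)) has_real_derivative kq d M i j x) (at 0)"
proof -
  have "((\<lambda>t. \<Sum>k<d. rot d i j t x k * mv d M (rot d i j t x) k) has_real_derivative
        (\<Sum>k<d. jv i j x k * mv d M (rot d i j 0 x) k + mv d M (jv i j x) k * rot d i j 0 x k)) (at 0)"
    by (intro DERIV_sum DERIV_mult dcomp dmv) auto
  moreover have "mv d M (rot d i j 0 x) k = mv d M x k" for k
    unfolding mv_def by (intro sum.cong) (auto simp: rot0k)
  moreover have "(\<Sum>k<d. jv i j x k * mv d M x k + mv d M (jv i j x) k * rot d i j 0 x k) = kq d M i j x"
  proof -
    have "(\<Sum>k<d. mv d M (jv i j x) k * rot d i j 0 x k) = (\<Sum>k<d. (- M k i * x j + M k j * x i) * x k)"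
      using ij by (intro sum.cong) (auto simp: mv_jv rot0k)
    also have "\<dots> = (\<Sum>k<d. (- x j) * (M i k * x k) + x i * (M j k * x k))"
    proof (intro sum.cong refl)
      fix k assume k: "k \<in> {..<d}"
      have "M k i = M i k" "M k j = M j k" using sym ij k unfolding symmetric_mat_def by auto
      then show "(- M k i * x j + M k j * x i) * x k = (- x j) * (M i k * x k) + x i * (M j k * x k)"
        by (simp add: algebra_simps)
    qed
    also have "\<dots> = - x j * (\<Sum>k<d. M i k * x k) + x i * (\<Sum>k<d. M j k * x k)"
      by (simp only: sum.distrib sum_distrib_left)
    also have "\<dots> = - x j * mv d M x i + x i * mv d M x j" by (simp add: mv_def)
    finally have e1: "(\<Sum>k<d. mv d M (jv i j x) k * rot d i j 0 x k) = - x j * mv d M x i + x i * mv d M x j" .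
    have "(\<Sum>k<d. jv i j x k * mv d M x k) = (\<Sum>k<d. (if k = i then - x j * mv d M x i else 0) + (if k = j then x i * mv d M x j else 0))"
      using ij by (intro sum.cong) (auto simp: jv_def)
    also have "\<dots> = - x j * mv d M x i + x i * mv d M x j" using ij by (simp add: sum.distrib)
    finally have e2: "(\<Sum>k<d. jv i j x k * mv d M x k) = - x j * mv d M x i + x i * mv d M x j" .
    show ?thesis using e1 e2 by (simp add: sum.distrib kq_def algebra_simps)
  qed
  ultimately show ?thesis by (simp add: qform_mv)
qed

lemma dkq:
  assumes ij: "i < d" "j < d" "i \<noteq> j" and sym: "symmetric_mat d M"
  shows "((\<lambda>t. kq d M i j (rot d i j t x)) has_real_derivative k2 d M i j x) (at 0)"
proof -
  have "((\<lambda>t. 2 * (rot d i j t x i * mv d M (rot d i j t x) j - rot d i j t x j * mv d M (rot d i j t x) i))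
      has_real_derivative 2 * ((jv i j x i * mv d M (rot d i j 0 x) j + mv d M (jv i j x) j * rot d i j 0 x i)
          - (jv i j x j * mv d M (rot d i j 0 x) i + mv d M (jv i j x) i * rot d i j 0 x j))) (at 0)"
    using ij by (intro DERIV_cmult DERIV_diff DERIV_mult dcomp dmv) auto
  moreover have "mv d M (rot d i j 0 x) k = mv d M x k" for k
    unfolding mv_def by (intro sum.cong) (auto simp: rot0k)
  moreover have "2 * ((jv i j x i * mv d M x j + mv d M (jv i j x) j * rot d i j 0 x i)
          - (jv i j x j * mv d M x i + mv d M (jv i j x) i * rot d i j 0 x j)) = k2 d M i j x"
    using ij sym unfolding symmetric_mat_def
    by (simp add: mv_jv rot0k jv_def k2_def power2_eq_square algebra_simps)
  ultimately show ?thesis by (simp add: kq_def)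
qed


lemma pair_sum:
  fixes d :: nat shows "(\<Sum>i<d. \<Sum>j\<in>{..<d} - {i}. f i j) = (\<Sum>i<d. \<Sum>j<d. f i j) - (\<Sum>i<d. f i i :: real)"
proof -
  have "(\<Sum>j<d. f i j) = f i i + (\<Sum>j\<in>{..<d} - {i}. f i j)" if "i < d" for i
    using that sum.remove[of "{..<d}" i "f i"] by simp
  then have "(\<Sum>i<d. \<Sum>j<d. f i j) = (\<Sum>i<d. f i i + (\<Sum>j\<in>{..<d} - {i}. f i j))"
    by (intro sum.cong) auto
  then show ?thesis by (simp add: sum.distrib)
qed

lemma S1:
  "(\<Sum>i<d. \<Sum>j\<in>{..<d} - {i}. k2 d B i j x) = 4 * tr d B * sqnorm d x - 4 * real d * qform d B x"
proof -
  let ?m = "mv d B x"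
  have p1: "(\<Sum>i<d. \<Sum>j<d. B j j * (x i)^2) = tr d B * sqnorm d x"
    by (subst sum.swap) (simp add: tr_def sqnorm_def sum_product)
  have p2: "(\<Sum>i<d. \<Sum>j<d. B i i * (x j)^2) = tr d B * sqnorm d x"
    by (simp add: tr_def sqnorm_def sum_product)
  have p3: "(\<Sum>i<d. \<Sum>j<d. B i j * x i * x j) = qform d B x"
    by (simp add: qform_def mult.commute mult.left_commute)
  have p4: "(\<Sum>i<d. \<Sum>j<d. x i * ?m i) = real d * qform d B x"
    by (simp add: qform_mv sum_distrib_left)
  have p5: "(\<Sum>i<d. \<Sum>j<d. x j * ?m j) = real d * qform d B x"
    by (simp add: qform_mv)
  have full: "(\<Sum>i<d. \<Sum>j<d. k2 d B i j x) = 2 * ((\<Sum>i<d. \<Sum>j<d. B j j * (x i)^2) + (\<Sum>i<d. \<Sum>j<d. B i i * (x j)^2)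
      - 2 * (\<Sum>i<d. \<Sum>j<d. B i j * x i * x j) - (\<Sum>i<d. \<Sum>j<d. x i * ?m i) - (\<Sum>i<d. \<Sum>j<d. x j * ?m j))"
    by (simp add: k2_def sum.distrib sum_subtractf sum_distrib_left mult.assoc)
  have diag: "(\<Sum>i<d. k2 d B i i x) = - 4 * qform d B x"
    by (simp add: k2_def qform_mv sum_distrib_left power2_eq_square algebra_simps)
  show ?thesis unfolding pair_sum full diag p1 p2 p3 p4 p5 by (simp add: algebra_simps)
qed

lemma S2:
  "(\<Sum>i<d. \<Sum>j\<in>{..<d} - {i}. kq d A i j x * kq d B i j x)
     = 8 * (sqnorm d x * ip d A B x - qform d A x * qform d B x)"
proof -
  let ?a = "mv d A x" and ?b = "mv d B x"
  have p1: "(\<Sum>i<d. \<Sum>j<d. (x i)^2 * (?a j * ?b j)) = sqnorm d x * ip d A B x"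
    by (simp add: ip_def sqnorm_def sum_product)
  have p2: "(\<Sum>i<d. \<Sum>j<d. (x i * ?b i) * (x j * ?a j)) = qform d B x * qform d A x"
    by (simp add: qform_mv sum_product)
  have p3: "(\<Sum>i<d. \<Sum>j<d. (x i * ?a i) * (x j * ?b j)) = qform d A x * qform d B x"
    by (simp add: qform_mv sum_product)
  have p4: "(\<Sum>i<d. \<Sum>j<d. (?a i * ?b i) * (x j)^2) = ip d A B x * sqnorm d x"
    by (simp add: ip_def sqnorm_def sum_product)
  have e: "kq d A i j x * kq d B i j x = 4 * ((x i)^2 * (?a j * ?b j) - (x i * ?b i) * (x j * ?a j)
      - (x i * ?a i) * (x j * ?b j) + (?a i * ?b i) * (x j)^2)" for i j
    by (simp add: kq_def power2_eq_square algebra_simps)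
  have full: "(\<Sum>i<d. \<Sum>j<d. kq d A i j x * kq d B i j x) = 4 * ((\<Sum>i<d. \<Sum>j<d. (x i)^2 * (?a j * ?b j))
      - (\<Sum>i<d. \<Sum>j<d. (x i * ?b i) * (x j * ?a j)) - (\<Sum>i<d. \<Sum>j<d. (x i * ?a i) * (x j * ?b j))
      + (\<Sum>i<d. \<Sum>j<d. (?a i * ?b i) * (x j)^2))"
    unfolding e by (simp add: sum.distrib sum_subtractf sum_distrib_left)
  have diag: "(\<Sum>i<d. kq d A i i x * kq d B i i x) = 0"
    by (simp add: kq_def)
  show ?thesis unfolding pair_sum full diag p1 p2 p3 p4 by (simp add: algebra_simps)
qed


definition bnd :: "nat \<Rightarrow> ((nat \<Rightarrow> real) \<Rightarrow> real) \<Rightarrow> bool" where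
  "bnd d f \<longleftrightarrow> (\<exists>C. \<forall>x. onS d x \<longrightarrow> \<bar>f x\<bar> \<le> C)"

definition nice :: "nat \<Rightarrow> ((nat \<Rightarrow> real) \<Rightarrow> real) \<Rightarrow> bool" where
  "nice d f \<longleftrightarrow> f \<in> borel_measurable (lebR d) \<and> bnd d f"

lemma abs_le_1_sq: "\<bar>t::real\<bar> \<le> 1 + t^2"
proof (cases "\<bar>t\<bar> \<le> 1")
  case True then show ?thesis by (smt (verit) zero_le_power2)
next
  case False
  then have "\<bar>t\<bar> * 1 \<le> \<bar>t\<bar> * \<bar>t\<bar>" by (intro mult_left_mono) auto
  also have "\<bar>t\<bar> * \<bar>t\<bar> = t^2" by (simp add: power2_eq_square abs_mult_self_eq)
  finally show ?thesis by simp
qed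

lemma coord_meas: "k < d \<Longrightarrow> (\<lambda>x. x k) \<in> borel_measurable (lebR d)"
  using measurable_component_singleton[of k "{..<d}" "\<lambda>_. lborel"] unfolding lebR_def by simp

lemma nice_const: "nice d (\<lambda>_. c)"
  by (auto simp: nice_def bnd_def)

lemma nice_coord: assumes "k < d" shows "nice d (\<lambda>x. x k)"
proof -
  have "\<bar>x k\<bar> \<le> 1 + real d" if "onS d x" for x
  proof -
    have "(x k)^2 \<le> sqnorm d x" unfolding sqnorm_def by (rule member_le_sum) (use assms in auto)
    then have "(x k)^2 \<le> real d" using that by (simp add: onS_def)
    then show ?thesis using abs_le_1_sq[of "x k"] by linarith
  qed
  then show ?thesis using coord_meas[OF assms] by (auto simp: nice_def bnd_def)
qed

lemma nice_add: "nice d f \<Longrightarrow> nice d g \<Longrightarrow> nice d (\<lambda>x. f x + g x)"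
  unfolding nice_def bnd_def
proof (elim conjE exE, intro conjI)
  fix C D assume "\<forall>x. onS d x \<longrightarrow> \<bar>f x\<bar> \<le> C" "\<forall>x. onS d x \<longrightarrow> \<bar>g x\<bar> \<le> D"
  then show "\<exists>C. \<forall>x. onS d x \<longrightarrow> \<bar>f x + g x\<bar> \<le> C"
    by (intro exI[of _ "C + D"]) (smt (verit))
qed auto

lemma nice_diff: "nice d f \<Longrightarrow> nice d g \<Longrightarrow> nice d (\<lambda>x. f x - g x)"
  unfolding nice_def bnd_def
proof (elim conjE exE, intro conjI)
  fix C D assume "\<forall>x. onS d x \<longrightarrow> \<bar>f x\<bar> \<le> C" "\<forall>x. onS d x \<longrightarrow> \<bar>g x\<bar> \<le> D"
  then show "\<exists>C. \<forall>x. onS d x \<longrightarrow> \<bar>f x - g x\<bar> \<le> C"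
    by (intro exI[of _ "C + D"]) (smt (verit))
qed auto

lemma nice_mult: "nice d f \<Longrightarrow> nice d g \<Longrightarrow> nice d (\<lambda>x. f x * g x)"
  unfolding nice_def bnd_def
proof (elim conjE exE, intro conjI)
  fix C D assume C: "\<forall>x. onS d x \<longrightarrow> \<bar>f x\<bar> \<le> C" and D: "\<forall>x. onS d x \<longrightarrow> \<bar>g x\<bar> \<le> D"
  show "\<exists>C. \<forall>x. onS d x \<longrightarrow> \<bar>f x * g x\<bar> \<le> C"
  proof (intro exI[of _ "C * D"] allI impI)
    fix x assume "onS d x"
    then have "\<bar>f x\<bar> \<le> C" "\<bar>g x\<bar> \<le> D" using C D by auto
    then show "\<bar>f x * g x\<bar> \<le> C * D" unfolding abs_mult by (intro mult_mono) auto
  qed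
qed auto

lemma nice_sum: "finite S \<Longrightarrow> (\<And>k. k \<in> S \<Longrightarrow> nice d (f k)) \<Longrightarrow> nice d (\<lambda>x. \<Sum>k\<in>S. f k x)"
proof (induction S rule: finite_induct)
  case empty then show ?case by (simp add: nice_const)
next
  case (insert a S) then show ?case by (simp add: nice_add)
qed

lemma nice_comp:
  assumes "continuous_on UNIV p" "\<And>t. \<bar>p t\<bar> \<le> a + b * \<bar>t\<bar>" "b \<ge> 0" "nice d f"
  shows "nice d (\<lambda>x. p (f x))"
  using assms unfolding nice_def bnd_def
proof (elim conjE exE, intro conjI)
  fix C assume C: "\<forall>x. onS d x \<longrightarrow> \<bar>f x\<bar> \<le> C"
  show "\<exists>C. \<forall>x. onS d x \<longrightarrow> \<bar>p (f x)\<bar> \<le> C"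
  proof (intro exI[of _ "a + b * C"] allI impI)
    fix x assume "onS d x"
    then have "\<bar>f x\<bar> \<le> C" using C by auto
    then have "b * \<bar>f x\<bar> \<le> b * C" using assms(3) by (intro mult_left_mono)
    then show "\<bar>p (f x)\<bar> \<le> a + b * C" using assms(2)[of "f x"] by linarith
  qed
next
  assume "f \<in> borel_measurable (lebR d)"
  then show "(\<lambda>x. p (f x)) \<in> borel_measurable (lebR d)"
    using measurable_comp[OF _ borel_measurable_continuous_onI[OF assms(1)]] by (simp add: comp_def)
qed

lemma nice_mv: "nice d (\<lambda>x. mv d M x k)"
  unfolding mv_def by (intro nice_sum nice_mult nice_const nice_coord) auto

lemma nice_qform: "nice d (qform d M)"
proof -
  have "nice d (\<lambda>x. \<Sum>k<d. x k * mv d M x k)"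
    by (intro nice_sum nice_mult nice_mv nice_coord) auto
  then show ?thesis by (simp add: qform_mv[abs_def])
qed

lemma nice_kq: "i < d \<Longrightarrow> j < d \<Longrightarrow> nice d (kq d M i j)"
  unfolding kq_def[abs_def] by (intro nice_mult nice_diff nice_const nice_coord nice_mv)

lemma nice_k2: "i < d \<Longrightarrow> j < d \<Longrightarrow> nice d (k2 d M i j)"
  unfolding k2_def[abs_def] power2_eq_square
  by (intro nice_mult nice_diff nice_add nice_const nice_coord nice_mv)

lemma nice_ip: "nice d (ip d A B)"
  unfolding ip_def[abs_def] by (intro nice_sum nice_mult nice_mv) auto

lemma nice_int: "0 < d \<Longrightarrow> nice d f \<Longrightarrow> integrable (sphere_unif d) f"
proof -
  assume d: "0 < d" and n: "nice d f"
  interpret S: prob_space "sphere_unif d" by (rule prob_sphere)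
  from n obtain C where C: "\<forall>x. onS d x \<longrightarrow> \<bar>f x\<bar> \<le> C" and m: "f \<in> borel_measurable (lebR d)"
    by (auto simp: nice_def bnd_def)
  have "AE x in sphere_unif d. norm (f x) \<le> C"
    using AE_onS[OF d] by eventually_elim (use C in auto)
  then show ?thesis by (rule S.integrable_const_bound) (use m in \<open>simp add: meas_sphere_cong\<close>)
qed

lemma deriv_lip:
  assumes dp: "\<And>t. (p has_real_derivative p' t) (at t)" and bp: "\<And>t. \<bar>p' t\<bar> \<le> L"
  shows "\<bar>p t - p s\<bar> \<le> L * \<bar>t - s\<bar>"
proof -
  have *: "\<bar>p b - p a\<bar> \<le> L * (b - a)" if ab: "a < b" for a b
  proof -
    obtain z where "p b - p a = (b - a) * p' z"
      using MVT2[OF ab, of p p'] dp by blast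
    then have "\<bar>p b - p a\<bar> = (b - a) * \<bar>p' z\<bar>" using ab by (simp add: abs_mult)
    also have "\<dots> \<le> (b - a) * L" using bp[of z] ab by (intro mult_left_mono) auto
    finally show ?thesis by (simp add: mult.commute)
  qed
  consider "t = s" | "s < t" | "t < s" by linarith
  then show ?thesis
  proof cases
    case 1 then show ?thesis by simp
  next
    case 2 then show ?thesis using *[OF 2] by simp
  next
    case 3 then show ?thesis using *[OF 3] by (simp add: abs_minus_commute)
  qed
qed

lemma deriv_cont:
  assumes dp: "\<And>t. (p has_real_derivative p' t) (at t)"
  shows "continuous_on UNIV p"
  using dp by (intro continuous_at_imp_continuous_on ballI DERIV_isCont) auto

lemma deriv_growth:
  assumes dp: "\<And>t. (p has_real_derivative p' t) (at t)" and bp: "\<And>t. \<bar>p' t\<bar> \<le> L"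
  shows "\<bar>p t\<bar> \<le> \<bar>p 0\<bar> + L * \<bar>t\<bar>"
  using deriv_lip[OF dp bp, of t 0] abs_triangle_ineq[of "p t - p 0" "p 0"] by simp


lemma master:
  assumes d2: "2 \<le> d" and sA: "symmetric_mat d A" and sB: "symmetric_mat d B"
  and dp: "\<And>t. (p has_real_derivative p' t) (at t)" and cp': "continuous_on UNIV p'"
  and bp': "\<And>t. \<bar>p' t\<bar> \<le> L"
  shows "(\<integral>x. p (qform d A x) * qform d B x \<partial>sphere_unif d)
    = tr d B * (\<integral>x. p (qform d A x) \<partial>sphere_unif d)
      + (2 / real d) * (\<integral>x. p' (qform d A x) * (real d * ip d A B x - qform d A x * qform d B x) \<partial>sphere_unif d)"
proof -
  let ?S = "sphere_unif d"
  have d0: "0 < d" using d2 by simp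
  have L0: "0 \<le> L" using bp'[of 0] by simp
  have np: "nice d (\<lambda>x. p (qform d A x))"
    by (rule nice_comp[OF deriv_cont[OF dp] deriv_growth[OF dp bp'] L0 nice_qform])
  have np': "nice d (\<lambda>x. p' (qform d A x))"
    by (rule nice_comp[OF cp', of L 0]) (use bp' nice_qform in auto)
  define G where "G i j x = p' (qform d A x) * kq d A i j x * kq d B i j x + p (qform d A x) * k2 d B i j x" for i j x
  have nG: "nice d (G i j)" if "i < d" "j < d" for i j
    unfolding G_def[abs_def] using that by (intro nice_add nice_mult np np' nice_kq nice_k2)
  have step1: "(\<integral>x. G i j x \<partial>?S) = 0" if ij: "i < d" "j < d" "i \<noteq> j" for i j
  proof -
    define F where "F x = p (qform d A x) * kq d B i j x" for x
    have nF: "nice d F" unfolding F_def[abs_def] using ij by (intro nice_mult np nice_kq)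
    obtain MF where MF: "\<forall>x. onS d x \<longrightarrow> \<bar>F x\<bar> \<le> MF" and Fm: "F \<in> borel_measurable (lebR d)"
      using nF by (auto simp: nice_def bnd_def)
    obtain MG where MG: "\<forall>x. onS d x \<longrightarrow> \<bar>G i j x\<bar> \<le> MG" and Gm: "G i j \<in> borel_measurable (lebR d)"
      using nG[OF ij(1,2)] by (auto simp: nice_def bnd_def)
    show ?thesis
    proof (rule ibp[OF ij Fm Gm])
      show "\<bar>F x\<bar> \<le> MF" if "onS d x" for x using MF that by auto
      show "\<bar>G i j x\<bar> \<le> MG" if "onS d x" for x using MG that by auto
      fix x assume x: "onS d x"
      then have x': "x \<in> space (lebR d)" by (simp add: onS_def)
      have h1: "((\<lambda>t. qform d A (rot d i j t x)) has_real_derivative kq d A i j x) (at 0)"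
        by (rule dqform[OF ij sA])
      have h2: "((\<lambda>t. p (qform d A (rot d i j t x))) has_real_derivative p' (qform d A x) * kq d A i j x) (at 0)"
        using DERIV_chain2[OF dp[of "qform d A (rot d i j 0 x)"] h1] x' by (simp add: rot_0)
      have h3: "((\<lambda>t. kq d B i j (rot d i j t x)) has_real_derivative k2 d B i j x) (at 0)"
        by (rule dkq[OF ij sB])
      have "((\<lambda>t. p (qform d A (rot d i j t x)) * kq d B i j (rot d i j t x)) has_real_derivative
          p' (qform d A x) * kq d A i j x * kq d B i j (rot d i j 0 x) + k2 d B i j x * p (qform d A (rot d i j 0 x))) (at 0)"
        by (rule DERIV_mult[OF h2 h3])
      moreover have "p' (qform d A x) * kq d A i j x * kq d B i j (rot d i j 0 x) + k2 d B i j x * p (qform d A (rot d i j 0 x)) = G i j x"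
        using x' by (simp add: rot_0 G_def mult.commute)
      ultimately show "((\<lambda>t. F (rot d i j t x)) has_real_derivative G i j x) (at 0)"
        by (simp add: F_def)
    qed
  qed
  have intG: "integrable ?S (\<lambda>x. \<Sum>j\<in>{..<d} - {i}. G i j x)" if "i < d" for i
    using that by (intro nice_int[OF d0] nice_sum nG) auto
  have intG2: "integrable ?S (G i j)" if "i < d" "j < d" for i j
    using that by (intro nice_int[OF d0] nG) auto
  have step2: "(\<integral>x. (\<Sum>i<d. \<Sum>j\<in>{..<d} - {i}. G i j x) \<partial>?S) = 0"
  proof -
    have "(\<integral>x. (\<Sum>i<d. \<Sum>j\<in>{..<d} - {i}. G i j x) \<partial>?S) = (\<Sum>i<d. \<integral>x. (\<Sum>j\<in>{..<d} - {i}. G i j x) \<partial>?S)"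
      by (rule Bochner_Integration.integral_sum[where f="\<lambda>i x. \<Sum>j\<in>{..<d} - {i}. G i j x"]) (use intG in auto)
    also have "\<dots> = (\<Sum>i<d. \<Sum>j\<in>{..<d} - {i}. \<integral>x. G i j x \<partial>?S)"
      by (intro sum.cong refl Bochner_Integration.integral_sum[where f="\<lambda>j x. G _ j x"]) (use intG2 in auto)
    also have "\<dots> = 0" by (intro sum.neutral ballI) (auto intro: step1)
    finally show ?thesis .
  qed
  define H where "H x = 8 * (p' (qform d A x) * (real d * ip d A B x - qform d A x * qform d B x))
     + (4 * tr d B * real d) * p (qform d A x) - (4 * real d) * (p (qform d A x) * qform d B x)" for x
  have step3: "AE x in ?S. (\<Sum>i<d. \<Sum>j\<in>{..<d} - {i}. G i j x) = H x"
    using AE_onS[OF d0]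
  proof eventually_elim
    case (elim x)
    then have sq: "sqnorm d x = real d" by (simp add: onS_def)
    have "(\<Sum>i<d. \<Sum>j\<in>{..<d} - {i}. G i j x)
        = p' (qform d A x) * (\<Sum>i<d. \<Sum>j\<in>{..<d} - {i}. kq d A i j x * kq d B i j x)
          + p (qform d A x) * (\<Sum>i<d. \<Sum>j\<in>{..<d} - {i}. k2 d B i j x)"
      by (simp add: G_def sum.distrib sum_distrib_left mult.assoc)
    also have "\<dots> = H x" unfolding S1 S2 sq H_def by (simp add: algebra_simps)
    finally show ?case .
  qed
  have I1: "integrable ?S (\<lambda>x. p' (qform d A x) * (real d * ip d A B x - qform d A x * qform d B x))"
    by (intro nice_int[OF d0] nice_mult nice_diff np' nice_const nice_ip nice_qform)
  have I2: "integrable ?S (\<lambda>x. p (qform d A x))" by (intro nice_int[OF d0] np)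
  have I3: "integrable ?S (\<lambda>x. p (qform d A x) * qform d B x)"
    by (intro nice_int[OF d0] nice_mult np nice_qform)
  have nH: "integrable ?S H"
    unfolding H_def[abs_def] by (intro nice_int[OF d0] nice_mult nice_diff nice_add np' np nice_const nice_ip nice_qform)
  have nS: "integrable ?S (\<lambda>x. \<Sum>i<d. \<Sum>j\<in>{..<d} - {i}. G i j x)"
    by (intro nice_int[OF d0] nice_sum nG) auto
  have "0 = (\<integral>x. H x \<partial>?S)"
    using step2 integral_cong_AE[OF borel_measurable_integrable[OF nS] borel_measurable_integrable[OF nH] step3] by simp
  also have "(\<integral>x. H x \<partial>?S) = 8 * (\<integral>x. p' (qform d A x) * (real d * ip d A B x - qform d A x * qform d B x) \<partial>?S)
      + (4 * tr d B * real d) * (\<integral>x. p (qform d A x) \<partial>?S) - (4 * real d) * (\<integral>x. p (qform d A x) * qform d B x \<partial>?S)"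
    unfolding H_def using I1 I2 I3 by simp
  finally show ?thesis using d0 by (simp add: field_simps)
qed


definition fro :: "nat \<Rightarrow> (nat \<Rightarrow> nat \<Rightarrow> real) \<Rightarrow> (nat \<Rightarrow> nat \<Rightarrow> real) \<Rightarrow> real" where
  "fro d A B = (\<Sum>k<d. \<Sum>l<d. A k l * B k l)"

definition symz :: "(nat \<Rightarrow> nat \<Rightarrow> real) \<Rightarrow> nat \<Rightarrow> nat \<Rightarrow> real" where
  "symz N k l = (N k l + N l k) / 2"

lemma symz_sym: "symmetric_mat d (symz N)"
  by (simp add: symmetric_mat_def symz_def add.commute)

lemma qform_symz: "qform d (symz N) x = qform d N x"
proof -
  have "qform d (symz N) x = (qform d N x + (\<Sum>k<d. \<Sum>l<d. x k * N l k * x l)) / 2"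
    by (simp add: qform_def symz_def sum_divide_distrib sum.distrib algebra_simps add_divide_distrib)
  also have "(\<Sum>k<d. \<Sum>l<d. x k * N l k * x l) = qform d N x"
    unfolding qform_def by (subst sum.swap) (simp add: mult.commute mult.left_commute)
  finally show ?thesis by simp
qed

lemma tr_symz: "tr d (symz N) = tr d N"
  by (simp add: tr_def symz_def)

lemma ip_qform: "ip d A B x = qform d (\<lambda>l m. \<Sum>k<d. A k l * B k m) x"
proof -
  have "ip d A B x = (\<Sum>k<d. \<Sum>l<d. \<Sum>m<d. (A k l * x l) * (B k m * x m))"
    by (simp add: ip_def mv_def sum_product)
  also have "\<dots> = (\<Sum>l<d. \<Sum>k<d. \<Sum>m<d. (A k l * x l) * (B k m * x m))"
    by (rule sum.swap)
  also have "\<dots> = (\<Sum>l<d. \<Sum>m<d. \<Sum>k<d. (A k l * x l) * (B k m * x m))"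
    by (intro sum.cong refl sum.swap)
  also have "\<dots> = qform d (\<lambda>l m. \<Sum>k<d. A k l * B k m) x"
    unfolding qform_def by (intro sum.cong refl) (simp add: sum_distrib_left sum_distrib_right algebra_simps)
  finally show ?thesis .
qed

lemma tr_AB: "tr d (\<lambda>l m. \<Sum>k<d. A k l * B k m) = fro d A B"
  unfolding tr_def fro_def by (rule sum.swap)

lemma int_qform:
  assumes d2: "2 \<le> d"
  shows "(\<integral>x. qform d N x \<partial>sphere_unif d) = tr d N"
proof -
  interpret S: prob_space "sphere_unif d" by (rule prob_sphere)
  have "(\<integral>x. (\<lambda>_. 1) (qform d (symz N) x) * qform d (symz N) x \<partial>sphere_unif d)
    = tr d (symz N) * (\<integral>x. (\<lambda>_. 1) (qform d (symz N) x) \<partial>sphere_unif d)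
      + (2 / real d) * (\<integral>x. (\<lambda>_. 0) (qform d (symz N) x) * (real d * ip d (symz N) (symz N) x - qform d (symz N) x * qform d (symz N) x) \<partial>sphere_unif d)"
    by (rule master[OF d2 symz_sym symz_sym, where L=0]) auto
  then show ?thesis by (simp add: qform_symz tr_symz S.prob_space)
qed

lemma int_prod:
  assumes d2: "2 \<le> d" and sA: "symmetric_mat d A" and sB: "symmetric_mat d B" and tB: "tr d B = 0"
  shows "(\<integral>x. qform d A x * qform d B x \<partial>sphere_unif d) = (2 * real d / (real d + 2)) * fro d A B"
proof -
  interpret S: prob_space "sphere_unif d" by (rule prob_sphere)
  have d0: "0 < d" using d2 by simp
  have m: "(\<integral>x. (\<lambda>t. t) (qform d A x) * qform d B x \<partial>sphere_unif d)
    = tr d B * (\<integral>x. (\<lambda>t. t) (qform d A x) \<partial>sphere_unif d)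
      + (2 / real d) * (\<integral>x. (\<lambda>_. 1) (qform d A x) * (real d * ip d A B x - qform d A x * qform d B x) \<partial>sphere_unif d)"
    by (rule master[OF d2 sA sB, where L=1]) (auto intro: DERIV_ident)
  have I1: "integrable (sphere_unif d) (ip d A B)" by (intro nice_int[OF d0] nice_ip)
  have I2: "integrable (sphere_unif d) (\<lambda>x. qform d A x * qform d B x)"
    by (intro nice_int[OF d0] nice_mult nice_qform)
  have ipi: "(\<integral>x. ip d A B x \<partial>sphere_unif d) = fro d A B"
    unfolding ip_qform by (simp add: int_qform[OF d2] tr_AB)
  define X where "X = (\<integral>x. qform d A x * qform d B x \<partial>sphere_unif d)"
  have "X = (2 / real d) * (real d * fro d A B - X)"
    using m I1 I2 ipi tB by (simp add: X_def)
  then have "X * (real d + 2) = 2 * real d * fro d A B" using d0 by (simp add: field_simps)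
  then show ?thesis using d0 by (simp add: X_def field_simps)
qed


lemma fro_nonneg: "0 \<le> fro d A A"
  by (simp add: fro_def sum_nonneg)

lemma op_rowbound:
  assumes "sqnorm d x \<le> 1"
  shows "(\<Sum>i<d. (\<Sum>j<d. A i j * x j)^2) \<le> fro d A A"
proof -
  have "(\<Sum>j<d. A i j * x j)^2 \<le> (\<Sum>j<d. (A i j)^2)" for i
  proof -
    have "(\<Sum>j<d. A i j * x j)^2 \<le> (\<Sum>j<d. (A i j)^2) * (\<Sum>j<d. (x j)^2)"
      by (rule Cauchy_Schwarz_ineq_sum)
    also have "\<dots> \<le> (\<Sum>j<d. (A i j)^2) * 1"
      using assms by (intro mult_left_mono) (auto simp: sqnorm_def sum_nonneg)
    finally show ?thesis by simp
  qed
  then have "(\<Sum>i<d. (\<Sum>j<d. A i j * x j)^2) \<le> (\<Sum>i<d. \<Sum>j<d. (A i j)^2)"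
    by (intro sum_mono) auto
  then show ?thesis by (simp add: fro_def power2_eq_square)
qed

lemma op_bdd: "bdd_above {sqrt (\<Sum>i<d. (\<Sum>j<d. A i j * x j)^2) | x. sqnorm d x \<le> 1}"
  by (rule bdd_aboveI[where M="sqrt (fro d A A)"]) (auto intro: op_rowbound)

lemma op_upper: "sqnorm d x \<le> 1 \<Longrightarrow> sqrt (\<Sum>i<d. (\<Sum>j<d. A i j * x j)^2) \<le> opnorm d A"
  unfolding opnorm_def by (rule cSup_upper[OF _ op_bdd]) auto

lemma op_nonneg: "0 \<le> opnorm d A"
  using op_upper[of d "\<lambda>_. 0" A] by (simp add: sqnorm_def)

lemma op_le_fro: "opnorm d A \<le> sqrt (fro d A A)"
  unfolding opnorm_def
proof (rule cSup_least)
  show "{sqrt (\<Sum>i<d. (\<Sum>j<d. A i j * x j)^2) | x. sqnorm d x \<le> 1} \<noteq> {}"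
    by (auto intro!: exI[of _ "\<lambda>_. 0"] simp: sqnorm_def)
  fix y assume "y \<in> {sqrt (\<Sum>i<d. (\<Sum>j<d. A i j * x j)^2) | x. sqnorm d x \<le> 1}"
  then obtain x where "sqnorm d x \<le> 1" "y = sqrt (\<Sum>i<d. (\<Sum>j<d. A i j * x j)^2)" by blast
  then show "y \<le> sqrt (fro d A A)" using real_sqrt_le_mono[OF op_rowbound] by blast
qed

lemma op_bound: "(\<Sum>i<d. (\<Sum>j<d. A i j * v j)^2) \<le> (opnorm d A)^2 * sqnorm d v"
proof (cases "sqnorm d v = 0")
  case True
  then have "v j = 0" if "j < d" for j
    using that unfolding sqnorm_def by (subst (asm) sum_nonneg_eq_0_iff) auto
  then show ?thesis by (simp add: True)
next
  case False
  define s where "s = sqnorm d v"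
  have s: "s > 0" using False by (simp add: s_def sqnorm_def sum_nonneg order_le_neq_trans)
  define w where "w j = v j / sqrt s" for j
  have "sqnorm d w = sqnorm d v / s" using s
    by (simp add: sqnorm_def w_def power_divide sum_divide_distrib)
  then have sw: "sqnorm d w = 1" using s by (simp add: s_def)
  have e: "(\<Sum>i<d. (\<Sum>j<d. A i j * w j)^2) = (\<Sum>i<d. (\<Sum>j<d. A i j * v j)^2) / s"
  proof -
    have "(\<Sum>j<d. A i j * w j)^2 = (\<Sum>j<d. A i j * v j)^2 / s" for i
    proof -
      have "(\<Sum>j<d. A i j * w j) = (\<Sum>j<d. A i j * v j) / sqrt s"
        unfolding w_def sum_divide_distrib by (simp add: times_divide_eq_right)
      then show ?thesis using s by (simp add: power_divide)
    qed
    then show ?thesis by (simp add: sum_divide_distrib)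
  qed
  have "sqrt (\<Sum>i<d. (\<Sum>j<d. A i j * w j)^2) \<le> opnorm d A"
    using op_upper[of d w A] sw by simp
  then have "(\<Sum>i<d. (\<Sum>j<d. A i j * w j)^2) \<le> (opnorm d A)^2"
  proof -
    assume h: "sqrt (\<Sum>i<d. (\<Sum>j<d. A i j * w j)^2) \<le> opnorm d A"
    have X0: "0 \<le> (\<Sum>i<d. (\<Sum>j<d. A i j * w j)^2)" by (simp add: sum_nonneg)
    have "(\<Sum>i<d. (\<Sum>j<d. A i j * w j)^2) = (sqrt (\<Sum>i<d. (\<Sum>j<d. A i j * w j)^2))^2"
      using X0 by simp
    also have "\<dots> \<le> (opnorm d A)^2" by (rule power_mono[OF h]) (simp add: sum_nonneg)
    finally show ?thesis .
  qed
  then have "(\<Sum>i<d. (\<Sum>j<d. A i j * v j)^2) / s \<le> (opnorm d A)^2" by (simp add: e)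
  then show ?thesis using s by (simp add: s_def divide_le_eq mult.commute)
qed

lemma qform_bound: "\<bar>qform d A x\<bar> \<le> opnorm d A * sqnorm d x"
proof -
  have "(qform d A x)^2 = (\<Sum>k<d. x k * mv d A x k)^2" by (simp add: qform_mv)
  also have "\<dots> \<le> (\<Sum>k<d. (x k)^2) * (\<Sum>k<d. (mv d A x k)^2)" by (rule Cauchy_Schwarz_ineq_sum)
  also have "(\<Sum>k<d. (mv d A x k)^2) \<le> (opnorm d A)^2 * sqnorm d x"
    unfolding mv_def by (rule op_bound)
  also have "(\<Sum>k<d. (x k)^2) * ((opnorm d A)^2 * sqnorm d x) = (opnorm d A * sqnorm d x)^2"
    by (simp add: sqnorm_def power2_eq_square)
  finally have "\<bar>qform d A x\<bar>^2 \<le> (opnorm d A * sqnorm d x)^2"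
    by (simp add: sqnorm_def sum_nonneg mult_left_mono)
  then show ?thesis
    by (rule power2_le_imp_le) (simp add: op_nonneg sqnorm_def sum_nonneg)
qed

lemma fro_AB_bound:
  assumes sA: "symmetric_mat d A"
  shows "fro d (\<lambda>l m. \<Sum>k<d. A k l * B k m) (\<lambda>l m. \<Sum>k<d. A k l * B k m) \<le> (opnorm d A)^2 * fro d B B"
proof -
  have col: "(\<Sum>l<d. (\<Sum>k<d. A k l * B k m)^2) \<le> (opnorm d A)^2 * (\<Sum>k<d. (B k m)^2)" for m
  proof -
    have "(\<Sum>l<d. (\<Sum>k<d. A k l * B k m)^2) = (\<Sum>l<d. (\<Sum>k<d. A l k * B k m)^2)"
      using sA unfolding symmetric_mat_def by (intro sum.cong refl) (auto intro!: arg_cong[where f="\<lambda>t. t^2"] sum.cong)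
    also have "\<dots> \<le> (opnorm d A)^2 * sqnorm d (\<lambda>k. B k m)" by (rule op_bound)
    finally show ?thesis by (simp add: sqnorm_def)
  qed
  have "fro d (\<lambda>l m. \<Sum>k<d. A k l * B k m) (\<lambda>l m. \<Sum>k<d. A k l * B k m) = (\<Sum>m<d. \<Sum>l<d. (\<Sum>k<d. A k l * B k m)^2)"
    unfolding fro_def by (subst sum.swap) (simp add: power2_eq_square)
  also have "\<dots> \<le> (\<Sum>m<d. (opnorm d A)^2 * (\<Sum>k<d. (B k m)^2))" by (intro sum_mono col)
  also have "\<dots> = (opnorm d A)^2 * fro d B B"
  proof -
    have "fro d B B = (\<Sum>l<d. \<Sum>k<d. (B k l)^2)"
      unfolding fro_def by (subst sum.swap) (simp add: power2_eq_square)
    then show ?thesis by (simp add: sum_distrib_left)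
  qed
  finally show ?thesis .
qed

lemma fro_symz: "fro d (symz N) (symz N) \<le> fro d N N"
proof -
  have "fro d (symz N) (symz N) \<le> (\<Sum>k<d. \<Sum>l<d. ((N k l)^2 + (N l k)^2) / 2)"
    unfolding fro_def symz_def
  proof (intro sum_mono)
    fix k l
    have "0 \<le> (N k l - N l k)^2" by simp
    then show "(N k l + N l k) / 2 * ((N k l + N l k) / 2) \<le> ((N k l)^2 + (N l k)^2) / 2"
      by (simp add: power2_eq_square field_simps)
  qed
  also have "\<dots> = (fro d N N + (\<Sum>k<d. \<Sum>l<d. (N l k)^2)) / 2"
    by (simp add: fro_def sum.distrib sum_divide_distrib power2_eq_square add_divide_distrib)
  also have "(\<Sum>k<d. \<Sum>l<d. (N l k)^2) = fro d N N"
    unfolding fro_def by (subst sum.swap) (simp add: power2_eq_square)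
  finally show ?thesis by simp
qed


lemma harm_facts:
  assumes d2: "2 \<le> d" and hA: "sph_harm2 d A"
  shows "symmetric_mat d A" "tr d A = 0" "fro d A A = (real d + 2) / (2 * real d)"
proof -
  show sA: "symmetric_mat d A" using hA by (simp add: sph_harm2_def)
  show tA: "tr d A = 0" using hA int_qform[OF d2, of A] by (simp add: sph_harm2_def)
  have "1 = (\<integral>x. qform d A x * qform d A x \<partial>sphere_unif d)"
    using hA by (simp add: sph_harm2_def power2_eq_square)
  also have "\<dots> = (2 * real d / (real d + 2)) * fro d A A" by (rule int_prod[OF d2 sA sA tA])
  finally show "fro d A A = (real d + 2) / (2 * real d)" using d2 by (simp add: field_simps)
qed

lemma smooth_bound:
  assumes d2: "2 \<le> d" and hA: "sph_harm2 d A" and hB: "sph_harm2 d B" and orth: "orth_harm2 d A B"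
  and dp: "\<And>t. (p has_real_derivative p' t) (at t)" and cp': "continuous_on UNIV p'"
  and bp': "\<And>t. \<bar>p' t\<bar> \<le> L"
  shows "\<bar>\<integral>x. p (qform d A x) * qform d B x \<partial>sphere_unif d\<bar> \<le> 5 * L * opnorm d A"
proof -
  let ?S = "sphere_unif d"
  interpret S: prob_space ?S by (rule prob_sphere)
  have d0: "0 < d" using d2 by simp
  have L0: "0 \<le> L" using bp'[of 0] by simp
  note fA = harm_facts[OF d2 hA] and fB = harm_facts[OF d2 hB]
  have fAB: "fro d A B = 0"
  proof -
    have "0 = (\<integral>x. qform d A x * qform d B x \<partial>?S)" using orth by (simp add: orth_harm2_def)
    also have "\<dots> = (2 * real d / (real d + 2)) * fro d A B" by (rule int_prod[OF d2 fA(1) fB(1) fB(2)])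
    finally show ?thesis using d0 by simp
  qed
  define op where "op = opnorm d A"
  have op0: "0 \<le> op" by (simp add: op_def op_nonneg)
  have opp: "0 < op"
  proof (rule ccontr)
    assume "\<not> 0 < op"
    then have "op = 0" using op0 by simp
    then have "qform d A x = 0" for x using qform_bound[of d A x] by (simp add: op_def)
    then show False using hA by (simp add: sph_harm2_def)
  qed
  define N where "N = (\<lambda>l m. \<Sum>k<d. A k l * B k m)"
  define M where "M = symz N"
  have sM: "symmetric_mat d M" by (simp add: M_def symz_sym)
  have tM: "tr d M = 0" by (simp add: M_def tr_symz N_def tr_AB fAB)
  have ipM: "ip d A B x = qform d M x" for x by (simp add: M_def qform_symz N_def ip_qform)
  have frM: "fro d M M \<le> op^2"
  proof -
    have "fro d M M \<le> fro d N N" by (simp add: M_def fro_symz)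
    also have "\<dots> \<le> op^2 * fro d B B" unfolding N_def op_def by (rule fro_AB_bound[OF fA(1)])
    also have "\<dots> \<le> op^2 * 1"
    proof (intro mult_left_mono)
      have r: "real d \<ge> 2" using d2 by simp
      have "(real d + 2) / (2 * real d) \<le> 1" using r by (simp add: divide_le_eq)
      then show "fro d B B \<le> 1" using fB(3) by simp
    qed simp
    finally show ?thesis by simp
  qed
  have m2: "(\<integral>x. qform d M x * qform d M x \<partial>?S) \<le> 2 * op^2"
  proof -
    have "(\<integral>x. qform d M x * qform d M x \<partial>?S) = (2 * real d / (real d + 2)) * fro d M M"
      by (rule int_prod[OF d2 sM sM tM])
    also have "\<dots> \<le> 2 * fro d M M"
      using d0 fro_nonneg[of d M] by (intro mult_right_mono) (auto simp: field_simps)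
    also have "\<dots> \<le> 2 * op^2" using frM by simp
    finally show ?thesis .
  qed
  have b2: "(\<integral>x. qform d B x * qform d B x \<partial>?S) = 1"
    using hB by (simp add: sph_harm2_def power2_eq_square)
  have nabs: "nice d (\<lambda>x. \<bar>f x\<bar>)" if "nice d f" for f
    by (rule nice_comp[where p=abs and a=0 and b=1]) (use that in \<open>auto intro: continuous_intros\<close>)
  have intm: "integrable ?S (\<lambda>x. \<bar>qform d M x\<bar>)" by (intro nice_int[OF d0] nabs nice_qform)
  have intb: "integrable ?S (\<lambda>x. \<bar>qform d B x\<bar>)" by (intro nice_int[OF d0] nabs nice_qform)
  have intmm: "integrable ?S (\<lambda>x. qform d M x * qform d M x)" by (intro nice_int[OF d0] nice_mult nice_qform)
  have intbb: "integrable ?S (\<lambda>x. qform d B x * qform d B x)" by (intro nice_int[OF d0] nice_mult nice_qform)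
  have Im: "(\<integral>x. \<bar>qform d M x\<bar> \<partial>?S) \<le> 3 / 2 * op"
  proof -
    have "(\<integral>x. \<bar>qform d M x\<bar> \<partial>?S) \<le> (\<integral>x. (qform d M x * qform d M x / op + op) / 2 \<partial>?S)"
    proof (rule integral_mono)
      show "integrable ?S (\<lambda>x. (qform d M x * qform d M x / op + op) / 2)" using intmm by simp
      fix x
      have "0 \<le> (\<bar>qform d M x\<bar> - op)^2" by simp
      then have "2 * op * \<bar>qform d M x\<bar> \<le> qform d M x * qform d M x + op * op"
        by (simp add: power2_eq_square algebra_simps abs_mult_self_eq)
      then show "\<bar>qform d M x\<bar> \<le> (qform d M x * qform d M x / op + op) / 2"
        using opp by (simp add: field_simps)
    qed (rule intm)
    also have "\<dots> = ((\<integral>x. qform d M x * qform d M x \<partial>?S) / op + op) / 2"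
      using intmm by (simp add: S.prob_space)
    also have "\<dots> \<le> (2 * op^2 / op + op) / 2"
      using m2 opp by (intro divide_right_mono add_right_mono divide_right_mono) auto
    also have "\<dots> = 3 / 2 * op" using opp by (simp add: power2_eq_square)
    finally show ?thesis .
  qed
  have Ib: "(\<integral>x. \<bar>qform d B x\<bar> \<partial>?S) \<le> 1"
  proof -
    have "(\<integral>x. \<bar>qform d B x\<bar> \<partial>?S) \<le> (\<integral>x. (qform d B x * qform d B x + 1) / 2 \<partial>?S)"
    proof (rule integral_mono)
      show "integrable ?S (\<lambda>x. (qform d B x * qform d B x + 1) / 2)" using intbb by simp
      fix x
      have "0 \<le> (\<bar>qform d B x\<bar> - 1)^2" by simp
      then show "\<bar>qform d B x\<bar> \<le> (qform d B x * qform d B x + 1) / 2"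
        by (simp add: power2_eq_square algebra_simps abs_mult_self_eq)
    qed (rule intb)
    also have "\<dots> = 1" using intbb b2 by (simp add: S.prob_space)
    finally show ?thesis .
  qed
  have mas: "(\<integral>x. p (qform d A x) * qform d B x \<partial>?S)
    = (2 / real d) * (\<integral>x. p' (qform d A x) * (real d * qform d M x - qform d A x * qform d B x) \<partial>?S)"
    using master[OF d2 fA(1) fB(1) dp cp' bp'] fB(2) by (simp add: ipM)
  have np': "nice d (\<lambda>x. p' (qform d A x))"
    by (rule nice_comp[OF cp', of L 0]) (use bp' nice_qform in auto)
  have intJ: "integrable ?S (\<lambda>x. p' (qform d A x) * (real d * qform d M x - qform d A x * qform d B x))"
    by (intro nice_int[OF d0] nice_mult nice_diff np' nice_const nice_qform)
  have intK: "integrable ?S (\<lambda>x. L * real d * \<bar>qform d M x\<bar> + L * op * real d * \<bar>qform d B x\<bar>)"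
    using intm intb by simp
  have "\<bar>\<integral>x. p' (qform d A x) * (real d * qform d M x - qform d A x * qform d B x) \<partial>?S\<bar>
      \<le> (\<integral>x. \<bar>p' (qform d A x) * (real d * qform d M x - qform d A x * qform d B x)\<bar> \<partial>?S)"
    by (rule integral_abs_bound)
  also have "\<dots> \<le> (\<integral>x. L * real d * \<bar>qform d M x\<bar> + L * op * real d * \<bar>qform d B x\<bar> \<partial>?S)"
  proof (rule integral_mono_AE)
    show "integrable ?S (\<lambda>x. \<bar>p' (qform d A x) * (real d * qform d M x - qform d A x * qform d B x)\<bar>)"
      using intJ by simp
    show "integrable ?S (\<lambda>x. L * real d * \<bar>qform d M x\<bar> + L * op * real d * \<bar>qform d B x\<bar>)" by (rule intK)
    show "AE x in ?S. \<bar>p' (qform d A x) * (real d * qform d M x - qform d A x * qform d B x)\<bar>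
        \<le> L * real d * \<bar>qform d M x\<bar> + L * op * real d * \<bar>qform d B x\<bar>"
      using AE_onS[OF d0]
    proof eventually_elim
      case (elim x)
      have qa: "\<bar>qform d A x\<bar> \<le> op * real d"
        using qform_bound[of d A x] elim by (simp add: op_def onS_def)
      have "\<bar>real d * qform d M x - qform d A x * qform d B x\<bar> \<le> real d * \<bar>qform d M x\<bar> + \<bar>qform d A x\<bar> * \<bar>qform d B x\<bar>"
        using abs_triangle_ineq4[of "real d * qform d M x" "qform d A x * qform d B x"]
        by (simp add: abs_mult)
      also have "\<dots> \<le> real d * \<bar>qform d M x\<bar> + op * real d * \<bar>qform d B x\<bar>"
        using qa by (intro add_left_mono mult_right_mono) auto
      finally have h: "\<bar>real d * qform d M x - qform d A x * qform d B x\<bar> \<le> real d * \<bar>qform d M x\<bar> + op * real d * \<bar>qform d B x\<bar>" .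
      have "\<bar>p' (qform d A x) * (real d * qform d M x - qform d A x * qform d B x)\<bar>
          = \<bar>p' (qform d A x)\<bar> * \<bar>real d * qform d M x - qform d A x * qform d B x\<bar>" by (simp add: abs_mult)
      also have "\<dots> \<le> L * (real d * \<bar>qform d M x\<bar> + op * real d * \<bar>qform d B x\<bar>)"
        using h bp' L0 by (intro mult_mono) auto
      finally show ?case by (simp add: algebra_simps)
    qed
  qed
  also have "\<dots> = L * real d * (\<integral>x. \<bar>qform d M x\<bar> \<partial>?S) + L * op * real d * (\<integral>x. \<bar>qform d B x\<bar> \<partial>?S)"
    using intm intb by simp
  also have "\<dots> \<le> L * real d * (3 / 2 * op) + L * op * real d * 1"
    using Im Ib L0 op0 by (intro add_mono mult_left_mono) auto
  finally have J: "\<bar>\<integral>x. p' (qform d A x) * (real d * qform d M x - qform d A x * qform d B x) \<partial>?S\<bar>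
      \<le> L * real d * (3 / 2 * op) + L * op * real d * 1" .
  have "\<bar>\<integral>x. p (qform d A x) * qform d B x \<partial>?S\<bar>
     = (2 / real d) * \<bar>\<integral>x. p' (qform d A x) * (real d * qform d M x - qform d A x * qform d B x) \<partial>?S\<bar>"
    unfolding mas using d0 by (simp add: abs_mult)
  also have "\<dots> \<le> (2 / real d) * (L * real d * (3 / 2 * op) + L * op * real d * 1)"
    using J d0 by (intro mult_left_mono) auto
  also have "\<dots> = 5 * L * op" using d0 by (simp add: field_simps)
  finally show ?thesis by (simp add: op_def)
qed


lemma int_abs_le1:
  assumes d2: "2 \<le> d" and hB: "sph_harm2 d B"
  shows "(\<integral>x. \<bar>qform d B x\<bar> \<partial>sphere_unif d) \<le> 1"
proof -
  let ?S = "sphere_unif d"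
  interpret S: prob_space ?S by (rule prob_sphere)
  have d0: "0 < d" using d2 by simp
  have nabs: "nice d (\<lambda>x. \<bar>f x\<bar>)" if "nice d f" for f
    by (rule nice_comp[where p=abs and a=0 and b=1]) (use that in \<open>auto intro: continuous_intros\<close>)
  have intb: "integrable ?S (\<lambda>x. \<bar>qform d B x\<bar>)" by (intro nice_int[OF d0] nabs nice_qform)
  have intbb: "integrable ?S (\<lambda>x. qform d B x * qform d B x)" by (intro nice_int[OF d0] nice_mult nice_qform)
  have b2: "(\<integral>x. qform d B x * qform d B x \<partial>?S) = 1"
    using hB by (simp add: sph_harm2_def power2_eq_square)
  have "(\<integral>x. \<bar>qform d B x\<bar> \<partial>?S) \<le> (\<integral>x. (qform d B x * qform d B x + 1) / 2 \<partial>?S)"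
  proof (rule integral_mono)
    show "integrable ?S (\<lambda>x. (qform d B x * qform d B x + 1) / 2)" using intbb by simp
    fix x
    have "0 \<le> (\<bar>qform d B x\<bar> - 1)^2" by simp
    then show "\<bar>qform d B x\<bar> \<le> (qform d B x * qform d B x + 1) / 2"
      by (simp add: power2_eq_square algebra_simps abs_mult_self_eq)
  qed (rule intb)
  also have "\<dots> = 1" using intbb b2 by (simp add: S.prob_space)
  finally show ?thesis .
qed

lemma lip_bound:
  assumes d2: "2 \<le> d" and hA: "sph_harm2 d A" and hB: "sph_harm2 d B" and orth: "orth_harm2 d A B"
  and lip: "L-lipschitz_on UNIV q"
  shows "\<bar>\<integral>x. q (qform d A x) * qform d B x \<partial>sphere_unif d\<bar> \<le> 5 * L * opnorm d A"
proof -
  let ?S = "sphere_unif d"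
  interpret S: prob_space ?S by (rule prob_sphere)
  have d0: "0 < d" using d2 by simp
  have L0: "0 \<le> L" using lip by (rule lipschitz_on_nonneg)
  have cq: "continuous_on UNIV q" using lip by (rule lipschitz_on_continuous_on)
  have lipD: "\<bar>q s - q t\<bar> \<le> L * \<bar>s - t\<bar>" for s t
    using lipschitz_onD[OF lip, of s t] by (simp add: dist_real_def)
  have "\<exists>F. \<forall>x :: real. -\<infinity> < x \<longrightarrow> x < \<infinity> \<longrightarrow> (F has_vector_derivative q x) (at x)"
    by (rule einterval_antiderivative) (use cq in \<open>auto simp: continuous_on_eq_continuous_at\<close>)
  then obtain Q where QD: "\<And>x. (Q has_real_derivative q x) (at x)"
    by (auto simp: has_real_derivative_iff_has_vector_derivative)
  have qgrowth: "\<bar>q t\<bar> \<le> \<bar>q 0\<bar> + L * \<bar>t\<bar>" for t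
    using lipD[of t 0] abs_triangle_ineq[of "q t - q 0" "q 0"] by simp
  have nq: "nice d (\<lambda>x. q (qform d A x) * qform d B x)"
    by (intro nice_mult nice_comp[OF cq qgrowth L0] nice_qform)
  have Ib: "(\<integral>x. \<bar>qform d B x\<bar> \<partial>?S) \<le> 1" by (rule int_abs_le1[OF d2 hB])
  show ?thesis
  proof (rule field_le_epsilon)
    fix e :: real assume e: "0 < e"
    define \<epsilon> where "\<epsilon> = e / (L + 1)"
    have ep: "0 < \<epsilon>" using e L0 by (simp add: \<epsilon>_def)
    have Lep: "L * \<epsilon> \<le> e"
    proof -
      have "L * \<epsilon> = e * (L / (L + 1))" by (simp add: \<epsilon>_def)
      also have "\<dots> \<le> e * 1" using e L0 by (intro mult_left_mono) auto
      finally show ?thesis by simp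
    qed
    define p where "p t = (Q (t + \<epsilon>) - Q t) / \<epsilon>" for t
    define p' where "p' t = (q (t + \<epsilon>) - q t) / \<epsilon>" for t
    have dp: "(p has_real_derivative p' t) (at t)" for t
    proof -
      have "((\<lambda>x. Q (x + \<epsilon>)) has_real_derivative q (t + \<epsilon>)) (at t)"
        using QD[of "t + \<epsilon>"] by (subst (asm) DERIV_shift)
      then have "((\<lambda>x. (Q (x + \<epsilon>) - Q x) / \<epsilon>) has_real_derivative (q (t + \<epsilon>) - q t) / \<epsilon>) (at t)"
        by (intro DERIV_cdivide DERIV_diff QD)
      then show ?thesis by (simp add: p_def[abs_def] p'_def)
    qed
    have cp': "continuous_on UNIV p'"
    proof -
      have "continuous_on UNIV (\<lambda>t. q (t + \<epsilon>))"
        by (rule continuous_on_compose2[OF cq]) (auto intro: continuous_intros)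
      then show ?thesis unfolding p'_def[abs_def] using cq ep by (intro continuous_intros) auto
    qed
    have bp': "\<bar>p' t\<bar> \<le> L" for t
    proof -
      have "\<bar>q (t + \<epsilon>) - q t\<bar> \<le> L * \<epsilon>" using lipD[of "t + \<epsilon>" t] ep by simp
      then show ?thesis using ep by (simp add: p'_def abs_divide divide_le_eq)
    qed
    have close: "\<bar>q t - p t\<bar> \<le> L * \<epsilon>" for t
    proof -
      have tt: "t < t + \<epsilon>" using ep by simp
      obtain z where z: "t < z" "z < t + \<epsilon>" "Q (t + \<epsilon>) - Q t = (t + \<epsilon> - t) * q z"
        using MVT2[OF tt, of Q q] QD by blast
      then have "p t = q z" using ep by (simp add: p_def)
      then have "\<bar>q t - p t\<bar> = \<bar>q z - q t\<bar>" by simp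
      also have "\<dots> \<le> L * \<bar>z - t\<bar>" by (rule lipD)
      also have "\<dots> \<le> L * \<epsilon>" using z L0 by (intro mult_left_mono) auto
      finally show ?thesis .
    qed
    have sb: "\<bar>\<integral>x. p (qform d A x) * qform d B x \<partial>?S\<bar> \<le> 5 * L * opnorm d A"
      by (rule smooth_bound[OF d2 hA hB orth dp cp' bp'])
    have np: "nice d (\<lambda>x. p (qform d A x) * qform d B x)"
      by (intro nice_mult nice_comp[OF deriv_cont[OF dp] deriv_growth[OF dp bp'] L0] nice_qform)
    have nabs: "nice d (\<lambda>x. \<bar>f x\<bar>)" if "nice d f" for f
      by (rule nice_comp[where p=abs and a=0 and b=1]) (use that in \<open>auto intro: continuous_intros\<close>)
    have intb: "integrable ?S (\<lambda>x. \<bar>qform d B x\<bar>)" by (intro nice_int[OF d0] nabs nice_qform)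
    have Iq: "integrable ?S (\<lambda>x. q (qform d A x) * qform d B x)" by (rule nice_int[OF d0 nq])
    have Ip: "integrable ?S (\<lambda>x. p (qform d A x) * qform d B x)" by (rule nice_int[OF d0 np])
    have diff: "\<bar>(\<integral>x. q (qform d A x) * qform d B x \<partial>?S) - (\<integral>x. p (qform d A x) * qform d B x \<partial>?S)\<bar> \<le> e"
    proof -
      have "\<bar>(\<integral>x. q (qform d A x) * qform d B x \<partial>?S) - (\<integral>x. p (qform d A x) * qform d B x \<partial>?S)\<bar>
          = \<bar>\<integral>x. q (qform d A x) * qform d B x - p (qform d A x) * qform d B x \<partial>?S\<bar>"
        using Iq Ip by simp
      also have "\<dots> \<le> (\<integral>x. \<bar>q (qform d A x) * qform d B x - p (qform d A x) * qform d B x\<bar> \<partial>?S)"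
        by (rule integral_abs_bound)
      also have "\<dots> \<le> (\<integral>x. L * \<epsilon> * \<bar>qform d B x\<bar> \<partial>?S)"
      proof (rule integral_mono)
        show "integrable ?S (\<lambda>x. \<bar>q (qform d A x) * qform d B x - p (qform d A x) * qform d B x\<bar>)"
          using Iq Ip by simp
        show "integrable ?S (\<lambda>x. L * \<epsilon> * \<bar>qform d B x\<bar>)" using intb by simp
        fix x
        have "\<bar>q (qform d A x) * qform d B x - p (qform d A x) * qform d B x\<bar>
            = \<bar>q (qform d A x) - p (qform d A x)\<bar> * \<bar>qform d B x\<bar>"
          by (simp add: abs_mult[symmetric] left_diff_distrib)
        also have "\<dots> \<le> L * \<epsilon> * \<bar>qform d B x\<bar>" by (intro mult_right_mono close) auto
        finally show "\<bar>q (qform d A x) * qform d B x - p (qform d A x) * qform d B x\<bar> \<le> L * \<epsilon> * \<bar>qform d B x\<bar>" .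
      qed
      also have "\<dots> = L * \<epsilon> * (\<integral>x. \<bar>qform d B x\<bar> \<partial>?S)" by simp
      also have "\<dots> \<le> L * \<epsilon> * 1" using Ib L0 ep by (intro mult_left_mono) auto
      also have "\<dots> \<le> e" using Lep by simp
      finally show ?thesis .
    qed
    show "\<bar>\<integral>x. q (qform d A x) * qform d B x \<partial>?S\<bar> \<le> 5 * L * opnorm d A + e"
      using sb diff by linarith
  qed
qed


lemma no_harm_small:
  assumes "d < 2" shows "\<not> sph_harm2 d B"
proof
  assume hB: "sph_harm2 d B"
  consider "d = 0" | "d = 1" using assms by linarith
  then show False
  proof cases
    case 1
    then show False using hB by (simp add: sph_harm2_def qform_def)
  next
    case 2
    interpret S: prob_space "sphere_unif 1" by (rule prob_sphere)
    have q1: "qform 1 B x = B 0 0 * (x 0)^2" for x by (simp add: qform_def power2_eq_square)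
    have q1': "qform (Suc 0) B x = B 0 0 * (x 0)^2" for x by (simp add: qform_def power2_eq_square)
    have ae1: "AE x in sphere_unif 1. onS 1 x" by (rule AE_onS) simp
    have "AE x in sphere_unif 1. qform 1 B x = B 0 0"
      using ae1
    proof eventually_elim
      case (elim x)
      then have "(x 0)^2 = 1" by (simp add: onS_def sqnorm_def)
      then show ?case by (simp only: q1)
    qed
    then have "(\<integral>x. qform 1 B x \<partial>sphere_unif 1) = (\<integral>x. B 0 0 \<partial>sphere_unif 1)"
      by (intro integral_cong_AE) (auto intro!: nice_qform[unfolded nice_def, THEN conjunct1] simp: meas_sphere_cong)
    moreover have pm: "measure (sphere_unif (Suc 0)) (space (sphere_unif (Suc 0))) = 1"
      using S.prob_space by simp
    ultimately have "B 0 0 = 0" using hB 2 by (simp add: sph_harm2_def pm)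
    then show False using hB 2 by (simp add: sph_harm2_def q1')
  qed
qed

theorem lemma25:
  shows "\<exists>C::real. \<forall>(d::nat) (A::nat \<Rightarrow> nat \<Rightarrow> real) (B::nat \<Rightarrow> nat \<Rightarrow> real)
            (q::real \<Rightarrow> real) (L::real).
     L-lipschitz_on UNIV q \<and> \<bar>q 0\<bar> \<le> L \<and>
     sph_harm2 d A \<and> sph_harm2 d B \<and> orth_harm2 d A B \<longrightarrow>
     \<bar>\<integral>x. q (qform d A x) * qform d B x \<partial>sphere_unif d\<bar>
       \<le> C * L * (sqrt (opnorm d A * ln (real d)) + opnorm d B * ln (real d))"
proof (intro exI[of _ 10] allI impI, elim conjE)
  fix d :: nat and A B :: "nat \<Rightarrow> nat \<Rightarrow> real" and q :: "real \<Rightarrow> real" and L :: real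
  assume lip: "L-lipschitz_on UNIV q" and hA: "sph_harm2 d A" and hB: "sph_harm2 d B"
    and orth: "orth_harm2 d A B"
  have d2: "2 \<le> d" using no_harm_small[of d B] hB by linarith
  have L0: "0 \<le> L" using lip by (rule lipschitz_on_nonneg)
  define op where "op = opnorm d A"
  have op0: "0 \<le> op" by (simp add: op_def op_nonneg)
  have op1: "op \<le> 1"
  proof -
    have r: "real d \<ge> 2" using d2 by simp
    have "fro d A A \<le> 1" using harm_facts(3)[OF d2 hA] r by (simp add: divide_le_eq)
    then have s1: "sqrt (fro d A A) \<le> 1" by simp
    show ?thesis unfolding op_def using op_le_fro[of d A] s1 by linarith
  qed
  have ln2: "1 / 2 \<le> ln (2::real)" using ln_diff_le[of 1 2] by simp
  have lnd: "1 / 2 \<le> ln (real d)"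
  proof -
    have "ln (2::real) \<le> ln (real d)" using d2 by simp
    then show ?thesis using ln2 by linarith
  qed
  have "(op / 2)^2 \<le> op * ln (real d)"
  proof -
    have "op * op \<le> op * 1" using op0 op1 by (intro mult_left_mono) auto
    then have "(op / 2)^2 \<le> op / 2" using op0 by (simp add: power2_eq_square field_simps)
    also have "\<dots> = op * (1 / 2)" by simp
    also have "\<dots> \<le> op * ln (real d)" using op0 lnd by (intro mult_left_mono) auto
    finally show ?thesis .
  qed
  then have sq: "op / 2 \<le> sqrt (op * ln (real d))" by (rule real_le_rsqrt)
  have opB: "0 \<le> opnorm d B * ln (real d)"
    using op_nonneg[of d B] lnd by simp
  have "\<bar>\<integral>x. q (qform d A x) * qform d B x \<partial>sphere_unif d\<bar> \<le> 5 * L * op"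
    unfolding op_def by (rule lip_bound[OF d2 hA hB orth lip])
  also have "\<dots> = 10 * L * (op / 2)" by simp
  also have "\<dots> \<le> 10 * L * (sqrt (op * ln (real d)) + opnorm d B * ln (real d))"
    using sq opB L0 by (intro mult_left_mono) auto
  finally show "\<bar>\<integral>x. q (qform d A x) * qform d B x \<partial>sphere_unif d\<bar>
       \<le> 10 * L * (sqrt (opnorm d A * ln (real d)) + opnorm d B * ln (real d))"
    by (simp add: op_def)
qed


end
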